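(* For a weakly coupled POMDP and horizon $T$, the linear relaxation of the MILP (IP) is a relaxation of the MDP approximation of the weakly coupled POMDP: from any feasible solution of the MDP approximation LP one can build a feasible solution of the linear relaxation of (IP) with the same objective value. Furthermore $v^*_{\mathrm{MDP}}\le z_{\mathrm R}$ and $v^*_{\mathrm{his}}\le z_{\mathrm R^{\mathrm c}}\le z_{\mathrm R}$.
   Context: Weakly coupled POMDP: components $m\in[M]$, each a POMDP $(\mathcal X_S^m,\mathcal X_O^m,\mathcal X_A^m,\mathfrak p^m,\mathbf r^m)$ with initial distribution $p^m(s)$, emissions $p^m(o|s)$, transitions $p^m(s'|s,a)$, reward $r^m(s,a,s')$; functions $\mathbf D^m:\mathcal X_A^m\to\mathbb R^q$ and $\mathbf b\in\mathbb R^q_{\ge0}$. The full system is the POMDP with $\mathcal X_S=\prod_m\mathcal X_S^m$, $\mathcal X_O=\prod_m\mathcal X_O^m$, action space $\mathcal X_A=\{\mathbf a\in\prod_m\mathcal X_A^m:\sum_m\mathbf D^m(a^m)\le\mathbf b\}$ (assumed nonempty), $p(\mathbf s)=\prod_m p^m(s^m)$, $p(\mathbf o|\mathbf s)=\prod_m p^m(o^m|s^m)$, $p(\mathbf s'|\mathbf s,\mathbf a)=\prod_m p^m(s'^m|s^m,a^m)$, $r(\mathbf s,\mathbf a,\mathbf s')=\sum_m r^m(s^m,a^m,s'^m)$. $v^*_{\mathrm{his}}$ is the maximum over history-dependent policies $\delta^t_{\mathbf a|\mathbf h}$ (distributions on $\mathcal X_A$ given the history $\mathbf h=(\mathbf o_1,\mathbf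 a_1,\dots,\mathbf o_t)$) of $\mathbb E_\delta[\sum_{t=1}^T r(\mathbf S_t,\mathbf A_t,\mathbf S_{t+1})]$. For a POMDP $(\mathcal X_S,\mathcal X_O,\mathcal X_A,\mathfrak p)$, $\mathcal Q^{\mathrm d}(T,\mathcal X_S,\mathcal X_O,\mathcal X_A,\mathfrak p)$ is the set of $(\tau,\delta)$, $\delta^t_{a|o}\in\{0,1\}$ with $\sum_a\delta^t_{a|o}=1$, and nonnegative $\tau=((\tau^1_s),(\tau^t_{soa}),(\tau^t_{sas'}))$ with (i) $\tau^1_s=p(s)$; (ii) $\sum_{o,a}\tau^t_{soa}=\nu^t_s$, $\nu^1_s=\tau^1_s$, $\nu^t_s=\sum_{s'',a''}\tau^{t-1}_{s''a''s}$ ($t\ge2$); (iii) $\sum_{\bar s}\tau^t_{sa\bar s}=\sum_o\tau^t_{soa}$; (iv) $\tau^t_{sas'}=p(s'|s,a)\sum_{\bar s}\tau^t_{sa\bar s}$; (McCormick) $\tau^t_{soa}\le p(o|s)\nu^t_s$, $\tau^t_{soa}\le\delta^t_{a|o}$, $\tau^t_{soa}\ge p(o|s)\nu^t_s+\delta^t_{a|o}-1$. MILP (IP): maximize $\sum_t\sum_m\sum_{s,a,s'}r^m(s,a,s')\tau^{t,m}_{sas'}$ s.t. $(\tau^m,\delta^m)\in\mathcal Q^{\mathrm d}(T,\mathcal X_S^m,\mathcal X_O^m,\mathcal X_A^m,\mathfrak p^m)$ for all $m$, $\tau^{t,m}_a=\sum_{s,o}\tau^{t,m}_{soa}$, and $\sum_m\sum_{a\in\mathcal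 X_A^m}\mathbf D^m(a)\tau^{t,m}_a\le\mathbf b$ for all $t$. $z_{\mathrm R}$: value of its linear relaxation ($\delta^{t,m}_{a|o}\in[0,1]$). $z_{\mathrm R^{\mathrm c}}$: value of the linear relaxation with, for each $m$ and $t\in\{2,\dots,T\}$, additional nonnegative variables $\tau^{t,m}_{s'a'soa}$ and constraints $\sum_{s',a'}\tau^{t,m}_{s'a'soa}=\tau^{t,m}_{soa}$; $\sum_a\tau^{t,m}_{s'a'soa}=p^m(o|s)p^m(s|s',a')\tau^{t-1,m}_{s'a'}$ where $\tau^{t-1,m}_{s'a'}:=\sum_{\bar s}\tau^{t-1,m}_{s'a'\bar s}$; $\tau^{t,m}_{s'a'soa}=p^m(s|s',a',o)\sum_{\bar s}\tau^{t,m}_{s'a'\bar soa}$ with $p^m(s|s',a',o)=p^m(o|s)p^m(s|s',a')/\sum_{\bar s}p^m(o|\bar s)p^m(\bar s|s',a')$. MDP approximation of the weakly coupled POMDP: the LP maximizing $\sum_t\sum_{\mathbf s,\mathbf a,\mathbf s'}r(\mathbf s,\mathbf a,\mathbf s')\mu^t_{\mathbf s\mathbf a\mathbf s'}$ over nonnegative $\mu^1_{\mathbf s},\mu^t_{\mathbf s\mathbf a\mathbf s'}$ ($\mathbf a\in\mathcal X_A$) with $\mu^1_{\mathbf s}=p(\mathbf s)$, $\sum_{\mathbf a,\mathbf s'}\mu^1_{\mathbf s\mathbf a\mathbf s'}=\mu^1_{\mathbf s}$, $\sum_{\mathbf a,\mathbf s'}\mu^t_{\mathbf s\mathbf a\mathbf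 s'}=\sum_{\mathbf s'',\mathbf a''}\mu^{t-1}_{\mathbf s''\mathbf a''\mathbf s}$ ($t\ge2$), $\mu^t_{\mathbf s\mathbf a\mathbf s'}=p(\mathbf s'|\mathbf s,\mathbf a)\sum_{\bar{\mathbf s}}\mu^t_{\mathbf s\mathbf a\bar{\mathbf s}}$; value $v^*_{\mathrm{MDP}}$. *)

theory Defs
  imports "HOL-Analysis.Analysis"
begin

text \<open>A POMDP with state set St, observation set Ob, action set Ac,
  initial distribution init s = p(s), emissions emis s ob = p(ob|s),
  transitions trans s a s' = p(s'|s,a) and reward rew s a s' = r(s,a,s').\<close>

record ('s, 'o, 'a) pomdp =
  St :: "'s set"
  Ob :: "'o set"
  Ac :: "'a set"
  init :: "'s \<Rightarrow> real"
  emis :: "'s \<Rightarrow> 'o \<Rightarrow> real"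
  trans :: "'s \<Rightarrow> 'a \<Rightarrow> 's \<Rightarrow> real"
  rew :: "'s \<Rightarrow> 'a \<Rightarrow> 's \<Rightarrow> real"

definition wf_pomdp :: "('s, 'o, 'a) pomdp \<Rightarrow> bool" where
  "wf_pomdp P \<longleftrightarrow>
     finite (St P) \<and> finite (Ob P) \<and> finite (Ac P) \<and>
     (\<forall>s\<in>St P. init P s \<ge> 0) \<and> (\<Sum>s\<in>St P. init P s) = 1 \<and>
     (\<forall>s\<in>St P. (\<forall>ob\<in>Ob P. emis P s ob \<ge> 0) \<and> (\<Sum>ob\<in>Ob P. emis P s ob) = 1) \<and>
     (\<forall>s\<in>St P. \<forall>a\<in>Ac P.
        (\<forall>s'\<in>St P. trans P s a s' \<ge> 0) \<and> (\<Sum>s'\<in>St P. trans P s a s') = 1)"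

text \<open>Components are indexed by m < M; D m a j is the j-th coordinate (j < q) of
  D^m(a); b j the j-th coordinate of b. The linking constraint
  sum_m D^m(a^m) <= b is componentwise.\<close>

definition joint ::
  "(nat \<Rightarrow> ('s, 'o, 'a) pomdp) \<Rightarrow> nat \<Rightarrow> nat \<Rightarrow> (nat \<Rightarrow> 'a \<Rightarrow> nat \<Rightarrow> real) \<Rightarrow> (nat \<Rightarrow> real)
    \<Rightarrow> (nat \<Rightarrow> 's, nat \<Rightarrow> 'o, nat \<Rightarrow> 'a) pomdp" where
  "joint C M q D b =
    \<lparr> St = PiE {..<M} (\<lambda>m. St (C m)),
      Ob = PiE {..<M} (\<lambda>m. Ob (C m)),
      Ac = {a \<in> PiE {..<M} (\<lambda>m. Ac (C m)). \<forall>j<q. (\<Sum>m<M. D m (a m) j) \<le> b j},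
      init = (\<lambda>s. \<Prod>m<M. init (C m) (s m)),
      emis = (\<lambda>s ob. \<Prod>m<M. emis (C m) (s m) (ob m)),
      trans = (\<lambda>s a s'. \<Prod>m<M. trans (C m) (s m) (a m) (s' m)),
      rew = (\<lambda>s a s'. \<Sum>m<M. rew (C m) (s m) (a m) (s' m)) \<rparr>"

text \<open>A history-dependent policy: pol t (os, as) a is the probability of action a at
  time t given the history (o_1, a_1, ..., o_t), stored as the list of the t
  observations and the list of the t-1 previous actions.\<close>

definition policy_valid :: "nat \<Rightarrow> ('s, 'o, 'a) pomdp \<Rightarrow> (nat \<Rightarrow> 'o list \<times> 'a list \<Rightarrow> 'a \<Rightarrow> real) \<Rightarrow> bool" where
  "policy_valid T P pol \<longleftrightarrow>
     (\<forall>t\<in>{1..T}. \<forall>h. (\<forall>a\<in>Ac P. pol t h a \<ge> 0) \<and> (\<Sum>a\<in>Ac P. pol t h a) = 1)"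

definition lists_len :: "'x set \<Rightarrow> nat \<Rightarrow> 'x list set" where
  "lists_len A n = {xs. set xs \<subseteq> A \<and> length xs = n}"

text \<open>Probability of the trajectory s_1 o_1 a_1 s_2 ... o_T a_T s_{T+1}
  (lists are 0-indexed: ss!t = s_{t+1}).\<close>

definition traj_prob ::
  "nat \<Rightarrow> ('s, 'o, 'a) pomdp \<Rightarrow> (nat \<Rightarrow> 'o list \<times> 'a list \<Rightarrow> 'a \<Rightarrow> real)
     \<Rightarrow> 's list \<Rightarrow> 'o list \<Rightarrow> 'a list \<Rightarrow> real" where
  "traj_prob T P pol ss os as =
     init P (ss ! 0) *
     (\<Prod>t<T. emis P (ss ! t) (os ! t) * pol (Suc t) (take (Suc t) os, take t as) (as ! t)
             * trans P (ss ! t) (as ! t) (ss ! Suc t))"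

definition his_value :: "nat \<Rightarrow> ('s, 'o, 'a) pomdp \<Rightarrow> (nat \<Rightarrow> 'o list \<times> 'a list \<Rightarrow> 'a \<Rightarrow> real) \<Rightarrow> real" where
  "his_value T P pol =
     (\<Sum>ss\<in>lists_len (St P) (Suc T). \<Sum>os\<in>lists_len (Ob P) T. \<Sum>as\<in>lists_len (Ac P) T.
        traj_prob T P pol ss os as * (\<Sum>t<T. rew P (ss ! t) (as ! t) (ss ! Suc t)))"

definition v_his :: "nat \<Rightarrow> ('s, 'o, 'a) pomdp \<Rightarrow> real" where
  "v_his T P = Sup {his_value T P pol | pol. policy_valid T P pol}"

definition mdp_feasible ::
  "nat \<Rightarrow> ('s, 'o, 'a) pomdp \<Rightarrow> ('s \<Rightarrow> real) \<Rightarrow> (nat \<Rightarrow> 's \<Rightarrow> 'a \<Rightarrow> 's \<Rightarrow> real) \<Rightarrow> bool" where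
  "mdp_feasible T P mu1 mu \<longleftrightarrow>
     (\<forall>s\<in>St P. mu1 s \<ge> 0 \<and> mu1 s = init P s) \<and>
     (\<forall>t\<in>{1..T}. \<forall>s\<in>St P. \<forall>a\<in>Ac P. \<forall>s'\<in>St P. mu t s a s' \<ge> 0) \<and>
     (\<forall>t\<in>{1..T}. \<forall>s\<in>St P.
        (\<Sum>a\<in>Ac P. \<Sum>s'\<in>St P. mu t s a s') =
        (if t = 1 then mu1 s else (\<Sum>s''\<in>St P. \<Sum>a''\<in>Ac P. mu (t - 1) s'' a'' s))) \<and>
     (\<forall>t\<in>{1..T}. \<forall>s\<in>St P. \<forall>a\<in>Ac P. \<forall>s'\<in>St P.
        mu t s a s' = trans P s a s' * (\<Sum>sb\<in>St P. mu t s a sb))"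

definition mdp_obj :: "nat \<Rightarrow> ('s, 'o, 'a) pomdp \<Rightarrow> (nat \<Rightarrow> 's \<Rightarrow> 'a \<Rightarrow> 's \<Rightarrow> real) \<Rightarrow> real" where
  "mdp_obj T P mu = (\<Sum>t=1..T. \<Sum>s\<in>St P. \<Sum>a\<in>Ac P. \<Sum>s'\<in>St P. rew P s a s' * mu t s a s')"

definition v_MDP :: "nat \<Rightarrow> ('s, 'o, 'a) pomdp \<Rightarrow> real" where
  "v_MDP T P = Sup {mdp_obj T P mu | mu1 mu. mdp_feasible T P mu1 mu}"

definition nuQ :: "('s, 'o, 'a) pomdp \<Rightarrow> ('s \<Rightarrow> real) \<Rightarrow> (nat \<Rightarrow> 's \<Rightarrow> 'a \<Rightarrow> 's \<Rightarrow> real) \<Rightarrow> nat \<Rightarrow> 's \<Rightarrow> real" where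
  "nuQ P tau1 taut t s =
     (if t = 1 then tau1 s else (\<Sum>s''\<in>St P. \<Sum>a''\<in>Ac P. taut (t - 1) s'' a'' s))"

text \<open>Constraints of Q^d except the integrality of delta (delta only in [0,1]).
  tauo t s ob a = tau^t_{soa}, taut t s a s' = tau^t_{sas'}, dl t ob a = delta^t_{a|ob}.\<close>

definition QR ::
  "nat \<Rightarrow> ('s, 'o, 'a) pomdp \<Rightarrow> ('s \<Rightarrow> real) \<Rightarrow> (nat \<Rightarrow> 's \<Rightarrow> 'o \<Rightarrow> 'a \<Rightarrow> real)
     \<Rightarrow> (nat \<Rightarrow> 's \<Rightarrow> 'a \<Rightarrow> 's \<Rightarrow> real) \<Rightarrow> (nat \<Rightarrow> 'o \<Rightarrow> 'a \<Rightarrow> real) \<Rightarrow> bool" where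
  "QR T P tau1 tauo taut dl \<longleftrightarrow>
     (\<forall>t\<in>{1..T}. \<forall>ob\<in>Ob P. (\<forall>a\<in>Ac P. 0 \<le> dl t ob a \<and> dl t ob a \<le> 1) \<and> (\<Sum>a\<in>Ac P. dl t ob a) = 1) \<and>
     (\<forall>s\<in>St P. tau1 s \<ge> 0 \<and> tau1 s = init P s) \<and>
     (\<forall>t\<in>{1..T}. \<forall>s\<in>St P. \<forall>ob\<in>Ob P. \<forall>a\<in>Ac P. tauo t s ob a \<ge> 0) \<and>
     (\<forall>t\<in>{1..T}. \<forall>s\<in>St P. \<forall>a\<in>Ac P. \<forall>s'\<in>St P. taut t s a s' \<ge> 0) \<and>
     (\<forall>t\<in>{1..T}. \<forall>s\<in>St P. (\<Sum>ob\<in>Ob P. \<Sum>a\<in>Ac P. tauo t s ob a) = nuQ P tau1 taut t s) \<and>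
     (\<forall>t\<in>{1..T}. \<forall>s\<in>St P. \<forall>a\<in>Ac P.
        (\<Sum>sb\<in>St P. taut t s a sb) = (\<Sum>ob\<in>Ob P. tauo t s ob a)) \<and>
     (\<forall>t\<in>{1..T}. \<forall>s\<in>St P. \<forall>a\<in>Ac P. \<forall>s'\<in>St P.
        taut t s a s' = trans P s a s' * (\<Sum>sb\<in>St P. taut t s a sb)) \<and>
     (\<forall>t\<in>{1..T}. \<forall>s\<in>St P. \<forall>ob\<in>Ob P. \<forall>a\<in>Ac P.
        tauo t s ob a \<le> emis P s ob * nuQ P tau1 taut t s \<and>
        tauo t s ob a \<le> dl t ob a \<and>
        tauo t s ob a \<ge> emis P s ob * nuQ P tau1 taut t s + dl t ob a - 1)"

definition QD ::
  "nat \<Rightarrow> ('s, 'o, 'a) pomdp \<Rightarrow> ('s \<Rightarrow> real) \<Rightarrow> (nat \<Rightarrow> 's \<Rightarrow> 'o \<Rightarrow> 'a \<Rightarrow> real)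
     \<Rightarrow> (nat \<Rightarrow> 's \<Rightarrow> 'a \<Rightarrow> 's \<Rightarrow> real) \<Rightarrow> (nat \<Rightarrow> 'o \<Rightarrow> 'a \<Rightarrow> real) \<Rightarrow> bool" where
  "QD T P tau1 tauo taut dl \<longleftrightarrow> QR T P tau1 tauo taut dl \<and>
     (\<forall>t\<in>{1..T}. \<forall>ob\<in>Ob P. \<forall>a\<in>Ac P. dl t ob a \<in> {0, 1})"

definition relax_feasible ::
  "nat \<Rightarrow> (nat \<Rightarrow> ('s, 'o, 'a) pomdp) \<Rightarrow> nat \<Rightarrow> nat \<Rightarrow> (nat \<Rightarrow> 'a \<Rightarrow> nat \<Rightarrow> real) \<Rightarrow> (nat \<Rightarrow> real)
     \<Rightarrow> (nat \<Rightarrow> 's \<Rightarrow> real) \<Rightarrow> (nat \<Rightarrow> nat \<Rightarrow> 's \<Rightarrow> 'o \<Rightarrow> 'a \<Rightarrow> real)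
     \<Rightarrow> (nat \<Rightarrow> nat \<Rightarrow> 's \<Rightarrow> 'a \<Rightarrow> 's \<Rightarrow> real) \<Rightarrow> (nat \<Rightarrow> nat \<Rightarrow> 'o \<Rightarrow> 'a \<Rightarrow> real) \<Rightarrow> bool" where
  "relax_feasible T C M q D b tau1 tauo taut dl \<longleftrightarrow>
     (\<forall>m<M. QR T (C m) (tau1 m) (tauo m) (taut m) (dl m)) \<and>
     (\<forall>t\<in>{1..T}. \<forall>j<q.
        (\<Sum>m<M. \<Sum>a\<in>Ac (C m). D m a j * (\<Sum>s\<in>St (C m). \<Sum>ob\<in>Ob (C m). tauo m t s ob a)) \<le> b j)"

definition relax_obj ::
  "nat \<Rightarrow> (nat \<Rightarrow> ('s, 'o, 'a) pomdp) \<Rightarrow> nat \<Rightarrow> (nat \<Rightarrow> nat \<Rightarrow> 's \<Rightarrow> 'a \<Rightarrow> 's \<Rightarrow> real) \<Rightarrow> real" where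
  "relax_obj T C M taut =
     (\<Sum>t=1..T. \<Sum>m<M. \<Sum>s\<in>St (C m). \<Sum>a\<in>Ac (C m). \<Sum>s'\<in>St (C m).
        rew (C m) s a s' * taut m t s a s')"

definition z_R ::
  "nat \<Rightarrow> (nat \<Rightarrow> ('s, 'o, 'a) pomdp) \<Rightarrow> nat \<Rightarrow> nat \<Rightarrow> (nat \<Rightarrow> 'a \<Rightarrow> nat \<Rightarrow> real) \<Rightarrow> (nat \<Rightarrow> real) \<Rightarrow> real" where
  "z_R T C M q D b =
     Sup {relax_obj T C M taut | tau1 tauo taut dl. relax_feasible T C M q D b tau1 tauo taut dl}"

definition pcond :: "('s, 'o, 'a) pomdp \<Rightarrow> 's \<Rightarrow> 'a \<Rightarrow> 'o \<Rightarrow> 's \<Rightarrow> real" where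
  "pcond P s' a' ob s =
     emis P s ob * trans P s' a' s / (\<Sum>sb\<in>St P. emis P sb ob * trans P s' a' sb)"

text \<open>tauc t s' a' s ob a = tau^t_{s'a'soa}, for t in {2..T}.\<close>

definition valid_cuts ::
  "nat \<Rightarrow> ('s, 'o, 'a) pomdp \<Rightarrow> (nat \<Rightarrow> 's \<Rightarrow> 'o \<Rightarrow> 'a \<Rightarrow> real) \<Rightarrow> (nat \<Rightarrow> 's \<Rightarrow> 'a \<Rightarrow> 's \<Rightarrow> real)
     \<Rightarrow> (nat \<Rightarrow> 's \<Rightarrow> 'a \<Rightarrow> 's \<Rightarrow> 'o \<Rightarrow> 'a \<Rightarrow> real) \<Rightarrow> bool" where
  "valid_cuts T P tauo taut tauc \<longleftrightarrow>
     (\<forall>t\<in>{2..T}. \<forall>s'\<in>St P. \<forall>a'\<in>Ac P. \<forall>s\<in>St P. \<forall>ob\<in>Ob P. \<forall>a\<in>Ac P.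
        tauc t s' a' s ob a \<ge> 0 \<and>
        tauc t s' a' s ob a = pcond P s' a' ob s * (\<Sum>sb\<in>St P. tauc t s' a' sb ob a)) \<and>
     (\<forall>t\<in>{2..T}. \<forall>s\<in>St P. \<forall>ob\<in>Ob P. \<forall>a\<in>Ac P.
        (\<Sum>s'\<in>St P. \<Sum>a'\<in>Ac P. tauc t s' a' s ob a) = tauo t s ob a) \<and>
     (\<forall>t\<in>{2..T}. \<forall>s'\<in>St P. \<forall>a'\<in>Ac P. \<forall>s\<in>St P. \<forall>ob\<in>Ob P.
        (\<Sum>a\<in>Ac P. tauc t s' a' s ob a) =
          emis P s ob * trans P s' a' s * (\<Sum>sb\<in>St P. taut (t - 1) s' a' sb))"

definition z_Rc ::
  "nat \<Rightarrow> (nat \<Rightarrow> ('s, 'o, 'a) pomdp) \<Rightarrow> nat \<Rightarrow> nat \<Rightarrow> (nat \<Rightarrow> 'a \<Rightarrow> nat \<Rightarrow> real) \<Rightarrow> (nat \<Rightarrow> real) \<Rightarrow> real" where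
  "z_Rc T C M q D b =
     Sup {relax_obj T C M taut | tau1 tauo taut dl tauc.
            relax_feasible T C M q D b tau1 tauo taut dl \<and>
            (\<forall>m<M. valid_cuts T (C m) (tauo m) (taut m) (tauc m))}"

end

theory Submission
  imports Defs
begin

lemma sum_PiE_marg:
  fixes f :: "'i \<Rightarrow> 'x \<Rightarrow> real"
  assumes fin: "finite I" "\<And>k. k \<in> I \<Longrightarrow> finite (A k)" and m: "m \<in> I" and sg: "\<sigma> \<in> A m"
  shows "(\<Sum>s\<in>PiE I A. if s m = \<sigma> then \<Prod>k\<in>I. f k (s k) else 0) = f m \<sigma> * (\<Prod>k\<in>I-{m}. \<Sum>x\<in>A k. f k x)"
proof -
  define f' where "f' k x = (if k = m then (if x = \<sigma> then f k x else 0) else f k x)" for k x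
  have "(\<Prod>k\<in>I. \<Sum>x\<in>A k. f' k x) = (\<Sum>g\<in>PiE I A. \<Prod>k\<in>I. f' k (g k))"
    by (rule prod_sum_PiE) (use fin in auto)
  moreover have "(\<Prod>k\<in>I. \<Sum>x\<in>A k. f' k x) = (\<Sum>x\<in>A m. f' m x) * (\<Prod>k\<in>I-{m}. \<Sum>x\<in>A k. f' k x)"
    using m fin by (simp add: prod.remove)
  moreover have "(\<Sum>x\<in>A m. f' m x) = f m \<sigma>"
    using sg fin m by (simp add: f'_def)
  moreover have "(\<Prod>k\<in>I-{m}. \<Sum>x\<in>A k. f' k x) = (\<Prod>k\<in>I-{m}. \<Sum>x\<in>A k. f k x)"
    by (rule prod.cong) (auto simp: f'_def)
  moreover have "(\<Prod>k\<in>I. f' k (g k)) = (if g m = \<sigma> then \<Prod>k\<in>I. f k (g k) else 0)" for g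
  proof -
    have "(\<Prod>k\<in>I. f' k (g k)) = f' m (g m) * (\<Prod>k\<in>I-{m}. f' k (g k))"
      using m fin by (simp add: prod.remove)
    also have "(\<Prod>k\<in>I-{m}. f' k (g k)) = (\<Prod>k\<in>I-{m}. f k (g k))"
      by (rule prod.cong) (auto simp: f'_def)
    also have "(\<Prod>k\<in>I. f k (g k)) = f m (g m) * (\<Prod>k\<in>I-{m}. f k (g k))"
      using m fin by (simp add: prod.remove)
    ultimately show ?thesis by (simp add: f'_def)
  qed
  ultimately show ?thesis by simp
qed

lemma sum_PiE_marg1:
  fixes f :: "'i \<Rightarrow> 'x \<Rightarrow> real"
  assumes fin: "finite I" "\<And>k. k \<in> I \<Longrightarrow> finite (A k)" and m: "m \<in> I" and sg: "\<sigma> \<in> A m"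
    and one: "\<And>k. k \<in> I \<Longrightarrow> k \<noteq> m \<Longrightarrow> (\<Sum>x\<in>A k. f k x) = 1"
  shows "(\<Sum>s\<in>PiE I A. if s m = \<sigma> then \<Prod>k\<in>I. f k (s k) else 0) = f m \<sigma>"
proof -
  have "(\<Prod>k\<in>I-{m}. \<Sum>x\<in>A k. f k x) = 1" by (rule prod.neutral) (use one in auto)
  then show ?thesis using sum_PiE_marg[where I=I and A=A and m=m and \<sigma>=\<sigma> and f=f, OF fin m sg] by simp
qed

lemma PiE_lessD: "s \<in> PiE {..<M} A \<Longrightarrow> k < M \<Longrightarrow> s k \<in> A k"
  by (auto simp: PiE_def Pi_def)

lemma sum_PiE_all:
  fixes f :: "'i \<Rightarrow> 'x \<Rightarrow> real"
  assumes fin: "finite I" "\<And>k. k \<in> I \<Longrightarrow> finite (A k)"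
    and one: "\<And>k. k \<in> I \<Longrightarrow> (\<Sum>x\<in>A k. f k x) = 1"
  shows "(\<Sum>s\<in>PiE I A. \<Prod>k\<in>I. f k (s k)) = 1"
  by (subst prod_sum_PiE[symmetric]) (use fin one in auto)

lemma joint_sel[simp]:
  "St (joint C M q D b) = PiE {..<M} (\<lambda>m. St (C m))"
  "Ob (joint C M q D b) = PiE {..<M} (\<lambda>m. Ob (C m))"
  "Ac (joint C M q D b) = {a \<in> PiE {..<M} (\<lambda>m. Ac (C m)). \<forall>j<q. (\<Sum>m<M. D m (a m) j) \<le> b j}"
  "init (joint C M q D b) = (\<lambda>s. \<Prod>m<M. init (C m) (s m))"
  "emis (joint C M q D b) = (\<lambda>s ob. \<Prod>m<M. emis (C m) (s m) (ob m))"
  "trans (joint C M q D b) = (\<lambda>s a s'. \<Prod>m<M. trans (C m) (s m) (a m) (s' m))"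
  "rew (joint C M q D b) = (\<lambda>s a s'. \<Sum>m<M. rew (C m) (s m) (a m) (s' m))"
  by (simp_all add: joint_def)

lemma wf_joint:
  assumes wf: "\<forall>m<M. wf_pomdp (C m)"
  shows "wf_pomdp (joint C M q D b)"
proof -
  have fS: "\<And>k. k < M \<Longrightarrow> finite (St (C k))" and fO: "\<And>k. k < M \<Longrightarrow> finite (Ob (C k))"
    and fA: "\<And>k. k < M \<Longrightarrow> finite (Ac (C k))" using wf by (auto simp: wf_pomdp_def)
  have "finite (PiE {..<M} (\<lambda>m. Ac (C m)))" by (rule finite_PiE) (auto simp: fA)
  then have fAc: "finite (Ac (joint C M q D b))" by (auto intro: finite_subset)
  show ?thesis unfolding wf_pomdp_def
  proof (intro conjI ballI)
    show "finite (St (joint C M q D b))" by (auto intro!: finite_PiE fS)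
    show "finite (Ob (joint C M q D b))" by (auto intro!: finite_PiE fO)
    show "finite (Ac (joint C M q D b))" by (rule fAc)
    show "init (joint C M q D b) s \<ge> 0" if "s \<in> St (joint C M q D b)" for s
    proof -
      have "\<And>k. k < M \<Longrightarrow> s k \<in> St (C k)" using that PiE_lessD by auto
      then show ?thesis using wf by (auto intro!: prod_nonneg simp: wf_pomdp_def)
    qed
    show "(\<Sum>s\<in>St (joint C M q D b). init (joint C M q D b) s) = 1"
      using wf by (simp, intro sum_PiE_all) (auto simp: wf_pomdp_def)
    show "0 \<le> emis (joint C M q D b) s ob" if s: "s \<in> St (joint C M q D b)" and ob: "ob \<in> Ob (joint C M q D b)" for s ob
    proof -
      have "\<And>k. k < M \<Longrightarrow> s k \<in> St (C k)" "\<And>k. k < M \<Longrightarrow> ob k \<in> Ob (C k)" using s ob PiE_lessD by auto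
      then show ?thesis using wf by (auto intro!: prod_nonneg simp: wf_pomdp_def)
    qed
    show "(\<Sum>ob\<in>Ob (joint C M q D b). emis (joint C M q D b) s ob) = 1" if s: "s \<in> St (joint C M q D b)" for s
    proof -
      have sk: "\<And>k. k < M \<Longrightarrow> s k \<in> St (C k)" using s PiE_lessD by auto
      then show ?thesis using wf by (simp, intro sum_PiE_all) (auto simp: wf_pomdp_def)
    qed
    show "0 \<le> trans (joint C M q D b) s a s'" if s: "s \<in> St (joint C M q D b)" and a: "a \<in> Ac (joint C M q D b)"
      and s': "s' \<in> St (joint C M q D b)" for s a s'
    proof -
      have "\<And>k. k < M \<Longrightarrow> s k \<in> St (C k)" "\<And>k. k < M \<Longrightarrow> s' k \<in> St (C k)" "\<And>k. k < M \<Longrightarrow> a k \<in> Ac (C k)"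
        using s s' a PiE_lessD by auto
      then show ?thesis using wf by (auto intro!: prod_nonneg simp: wf_pomdp_def)
    qed
    show "(\<Sum>s'\<in>St (joint C M q D b). trans (joint C M q D b) s a s') = 1"
      if s: "s \<in> St (joint C M q D b)" and a: "a \<in> Ac (joint C M q D b)" for s a
    proof -
      have "\<And>k. k < M \<Longrightarrow> s k \<in> St (C k)" "\<And>k. k < M \<Longrightarrow> a k \<in> Ac (C k)"
        using s a PiE_lessD by auto
      then show ?thesis using wf by (simp, intro sum_PiE_all) (auto simp: wf_pomdp_def)
    qed
  qed
qed

definition tri :: "('s,'o,'a) pomdp \<Rightarrow> nat \<Rightarrow> ('s list \<Rightarrow> 'o list \<Rightarrow> 'a list \<Rightarrow> real) \<Rightarrow> real" where
  "tri P k F = (\<Sum>ss\<in>lists_len (St P) (Suc k). \<Sum>os\<in>lists_len (Ob P) k. \<Sum>as\<in>lists_len (Ac P) k. F ss os as)"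

definition Gp :: "('s,'o,'a) pomdp \<Rightarrow> (nat \<Rightarrow> 'o list \<times> 'a list \<Rightarrow> 'a \<Rightarrow> real) \<Rightarrow> nat \<Rightarrow> 's list \<Rightarrow> 'o list \<Rightarrow> 'a list \<Rightarrow> real" where
  "Gp P pol k ss os as = init P (ss ! 0) *
     (\<Prod>t<k. emis P (ss ! t) (os ! t) * pol (Suc t) (take (Suc t) os, take t as) (as ! t)
             * trans P (ss ! t) (as ! t) (ss ! Suc t))"

lemma traj_prob_Gp: "traj_prob T P pol = Gp P pol T"
  by (simp add: fun_eq_iff traj_prob_def Gp_def)

lemma lists_len_finite: "finite A \<Longrightarrow> finite (lists_len A n)"
  unfolding lists_len_def by (rule finite_lists_length_eq)

lemma lists_len_Suc_sum:
  fixes f :: "'x list \<Rightarrow> real"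
  assumes "finite A"
  shows "(\<Sum>xs\<in>lists_len A (Suc n). f xs) = (\<Sum>xs\<in>lists_len A n. \<Sum>x\<in>A. f (xs @ [x]))"
proof -
  have eq: "lists_len A (Suc n) = (\<lambda>(xs, x). xs @ [x]) ` (lists_len A n \<times> A)"
  proof (rule set_eqI, rule iffI)
    fix ys assume "ys \<in> lists_len A (Suc n)"
    then have "ys \<noteq> []" "set ys \<subseteq> A" "length ys = Suc n" by (auto simp: lists_len_def)
    then show "ys \<in> (\<lambda>(xs, x). xs @ [x]) ` (lists_len A n \<times> A)"
      by (intro image_eqI[where x="(butlast ys, last ys)"])
         (use in_set_butlastD in \<open>fastforce simp: lists_len_def\<close>)+
  qed (auto simp: lists_len_def)
  have inj: "inj_on (\<lambda>(xs, x). xs @ [x]) (lists_len A n \<times> A)"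
    by (auto simp: inj_on_def)
  have "(\<Sum>xs\<in>lists_len A (Suc n). f xs) = (\<Sum>p\<in>lists_len A n \<times> A. f ((\<lambda>(xs, x). xs @ [x]) p))"
    unfolding eq by (rule sum.reindex[OF inj, unfolded o_def])
  also have "\<dots> = (\<Sum>(xs, x)\<in>lists_len A n \<times> A. f (xs @ [x]))"
    by (simp add: split_def)
  also have "\<dots> = (\<Sum>xs\<in>lists_len A n. \<Sum>x\<in>A. f (xs @ [x]))"
    by (rule sum.cartesian_product[symmetric])
  finally show ?thesis .
qed

lemma sum_if_const: "(\<Sum>x\<in>A. if c then f x else 0) = (if c then (\<Sum>x\<in>A. f x) else (0::real))"
  by simp

lemma tri_Suc:
  assumes "finite (St P)" "finite (Ob P)" "finite (Ac P)"
  shows "tri P (Suc k) F = tri P k (\<lambda>ss os as. \<Sum>s\<in>St P. \<Sum>ob\<in>Ob P. \<Sum>a\<in>Ac P. F (ss @ [s]) (os @ [ob]) (as @ [a]))"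
proof -
  have "tri P (Suc k) F = (\<Sum>ss\<in>lists_len (St P) (Suc k). \<Sum>s\<in>St P. \<Sum>os\<in>lists_len (Ob P) k. \<Sum>ob\<in>Ob P.
          \<Sum>as\<in>lists_len (Ac P) k. \<Sum>a\<in>Ac P. F (ss @ [s]) (os @ [ob]) (as @ [a]))"
    unfolding tri_def using assms by (simp add: lists_len_Suc_sum)
  also have "\<dots> = (\<Sum>ss\<in>lists_len (St P) (Suc k). \<Sum>os\<in>lists_len (Ob P) k. \<Sum>as\<in>lists_len (Ac P) k.
       \<Sum>s\<in>St P. \<Sum>ob\<in>Ob P. \<Sum>a\<in>Ac P. F (ss @ [s]) (os @ [ob]) (as @ [a]))"
  proof (rule sum.cong[OF refl])
    fix ss
    have "(\<Sum>s\<in>St P. \<Sum>os\<in>lists_len (Ob P) k. \<Sum>ob\<in>Ob P. \<Sum>as\<in>lists_len (Ac P) k. \<Sum>a\<in>Ac P. F (ss @ [s]) (os @ [ob]) (as @ [a]))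
        = (\<Sum>os\<in>lists_len (Ob P) k. \<Sum>s\<in>St P. \<Sum>ob\<in>Ob P. \<Sum>as\<in>lists_len (Ac P) k. \<Sum>a\<in>Ac P. F (ss @ [s]) (os @ [ob]) (as @ [a]))"
      by (rule sum.swap)
    also have "\<dots> = (\<Sum>os\<in>lists_len (Ob P) k. \<Sum>as\<in>lists_len (Ac P) k. \<Sum>s\<in>St P. \<Sum>ob\<in>Ob P. \<Sum>a\<in>Ac P. F (ss @ [s]) (os @ [ob]) (as @ [a]))"
    proof (rule sum.cong[OF refl])
      fix os
      have "(\<Sum>s\<in>St P. \<Sum>ob\<in>Ob P. \<Sum>as\<in>lists_len (Ac P) k. \<Sum>a\<in>Ac P. F (ss @ [s]) (os @ [ob]) (as @ [a]))
          = (\<Sum>s\<in>St P. \<Sum>as\<in>lists_len (Ac P) k. \<Sum>ob\<in>Ob P. \<Sum>a\<in>Ac P. F (ss @ [s]) (os @ [ob]) (as @ [a]))"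
        by (rule sum.cong[OF refl], rule sum.swap)
      also have "\<dots> = (\<Sum>as\<in>lists_len (Ac P) k. \<Sum>s\<in>St P. \<Sum>ob\<in>Ob P. \<Sum>a\<in>Ac P. F (ss @ [s]) (os @ [ob]) (as @ [a]))"
        by (rule sum.swap)
      finally show "(\<Sum>s\<in>St P. \<Sum>ob\<in>Ob P. \<Sum>as\<in>lists_len (Ac P) k. \<Sum>a\<in>Ac P. F (ss @ [s]) (os @ [ob]) (as @ [a]))
          = (\<Sum>as\<in>lists_len (Ac P) k. \<Sum>s\<in>St P. \<Sum>ob\<in>Ob P. \<Sum>a\<in>Ac P. F (ss @ [s]) (os @ [ob]) (as @ [a]))" .
    qed
    finally show "(\<Sum>s\<in>St P. \<Sum>os\<in>lists_len (Ob P) k. \<Sum>ob\<in>Ob P. \<Sum>as\<in>lists_len (Ac P) k. \<Sum>a\<in>Ac P. F (ss @ [s]) (os @ [ob]) (as @ [a]))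
        = (\<Sum>os\<in>lists_len (Ob P) k. \<Sum>as\<in>lists_len (Ac P) k. \<Sum>s\<in>St P. \<Sum>ob\<in>Ob P. \<Sum>a\<in>Ac P. F (ss @ [s]) (os @ [ob]) (as @ [a]))" .
  qed
  finally show ?thesis unfolding tri_def .
qed

lemma Gp_snoc:
  assumes "length ss = Suc k" "length os = k" "length as = k"
  shows "Gp P pol (Suc k) (ss @ [s]) (os @ [ob]) (as @ [a]) =
         Gp P pol k ss os as * (emis P (ss ! k) ob * pol (Suc k) (os @ [ob], as) a * trans P (ss ! k) a s)"
proof -
  have "(\<Prod>t<k. emis P ((ss @ [s]) ! t) ((os @ [ob]) ! t) * pol (Suc t) (take (Suc t) (os @ [ob]), take t (as @ [a])) ((as @ [a]) ! t)
             * trans P ((ss @ [s]) ! t) ((as @ [a]) ! t) ((ss @ [s]) ! Suc t))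
      = (\<Prod>t<k. emis P (ss ! t) (os ! t) * pol (Suc t) (take (Suc t) os, take t as) (as ! t)
             * trans P (ss ! t) (as ! t) (ss ! Suc t))"
    by (rule prod.cong) (use assms in \<open>auto simp: nth_append\<close>)
  moreover have "(ss @ [s]) ! 0 = ss ! 0" using assms by (simp add: nth_append)
  ultimately show ?thesis using assms
    by (simp add: Gp_def nth_append mult_ac)
qed

lemma lists_len_0[simp]: "lists_len A 0 = {[]}"
  by (auto simp: lists_len_def)

lemma lists_len_length: "xs \<in> lists_len A n \<Longrightarrow> length xs = n"
  by (simp add: lists_len_def)

lemma lists_len_nth: "xs \<in> lists_len A n \<Longrightarrow> i < n \<Longrightarrow> xs ! i \<in> A"
  by (auto simp: lists_len_def)

lemma tri_cong:
  assumes "\<And>ss os as. ss \<in> lists_len (St P) (Suc k) \<Longrightarrow> os \<in> lists_len (Ob P) k \<Longrightarrow> as \<in> lists_len (Ac P) k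
     \<Longrightarrow> F ss os as = F' ss os as"
  shows "tri P k F = tri P k F'"
  unfolding tri_def using assms by (intro sum.cong refl) auto

lemma tri_cmult: "tri P k (\<lambda>ss os as. c * F ss os as) = c * tri P k F"
  unfolding tri_def by (simp add: sum_distrib_left)

lemma tri_add: "tri P k (\<lambda>ss os as. F ss os as + F' ss os as) = tri P k F + tri P k F'"
  unfolding tri_def by (simp add: sum.distrib)

lemma tri_sum: "tri P k (\<lambda>ss os as. \<Sum>x\<in>A. F x ss os as) = (\<Sum>x\<in>A. tri P k (F x))"
proof -
  have "tri P k (\<lambda>ss os as. \<Sum>x\<in>A. F x ss os as) =
     (\<Sum>ss\<in>lists_len (St P) (Suc k). \<Sum>os\<in>lists_len (Ob P) k. \<Sum>x\<in>A. \<Sum>as\<in>lists_len (Ac P) k. F x ss os as)"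
    unfolding tri_def by (intro sum.cong refl sum.swap)
  also have "\<dots> = (\<Sum>ss\<in>lists_len (St P) (Suc k). \<Sum>x\<in>A. \<Sum>os\<in>lists_len (Ob P) k. \<Sum>as\<in>lists_len (Ac P) k. F x ss os as)"
    by (intro sum.cong refl sum.swap)
  also have "\<dots> = (\<Sum>x\<in>A. tri P k (F x))"
    unfolding tri_def by (rule sum.swap)
  finally show ?thesis .
qed

lemma tri_nonneg:
  assumes "\<And>ss os as. ss \<in> lists_len (St P) (Suc k) \<Longrightarrow> os \<in> lists_len (Ob P) k \<Longrightarrow> as \<in> lists_len (Ac P) k
     \<Longrightarrow> F ss os as \<ge> 0"
  shows "tri P k F \<ge> 0"
  unfolding tri_def using assms by (intro sum_nonneg) auto

lemma sum3_one:
  fixes c :: real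
  assumes "finite S" "finite Os" "finite A"
    and e: "(\<Sum>ob\<in>Os. e ob) = 1" and p: "\<And>ob. ob \<in> Os \<Longrightarrow> (\<Sum>a\<in>A. p ob a) = 1"
    and tr: "\<And>a. a \<in> A \<Longrightarrow> (\<Sum>s\<in>S. tr a s) = 1"
  shows "(\<Sum>s\<in>S. \<Sum>ob\<in>Os. \<Sum>a\<in>A. c * (e ob * p ob a * tr a s)) = c"
proof -
  have "(\<Sum>s\<in>S. \<Sum>ob\<in>Os. \<Sum>a\<in>A. c * (e ob * p ob a * tr a s)) = (\<Sum>ob\<in>Os. \<Sum>s\<in>S. \<Sum>a\<in>A. c * (e ob * p ob a * tr a s))"
    by (rule sum.swap)
  also have "\<dots> = (\<Sum>ob\<in>Os. \<Sum>a\<in>A. \<Sum>s\<in>S. c * (e ob * p ob a * tr a s))"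
    by (intro sum.cong refl sum.swap)
  also have "\<dots> = (\<Sum>ob\<in>Os. \<Sum>a\<in>A. c * e ob * p ob a * (\<Sum>s\<in>S. tr a s))"
    by (simp add: sum_distrib_left mult_ac)
  also have "\<dots> = (\<Sum>ob\<in>Os. \<Sum>a\<in>A. c * e ob * p ob a)"
    using tr by simp
  also have "\<dots> = (\<Sum>ob\<in>Os. c * e ob * (\<Sum>a\<in>A. p ob a))"
    by (simp add: sum_distrib_left mult_ac)
  also have "\<dots> = (\<Sum>ob\<in>Os. c * e ob)"
    using p by simp
  also have "\<dots> = c" using e by (simp add: sum_distrib_left[symmetric])
  finally show ?thesis .
qed

lemma mult_if0: "c * (if P then x else 0) = (if P then c * x else (0::real))"
  and if0_mult: "(if P then x else 0) * c = (if P then x * c else (0::real))"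
  by simp_all

locale trajs =
  fixes P :: "('s,'o,'a) pomdp" and pol :: "nat \<Rightarrow> 'o list \<times> 'a list \<Rightarrow> 'a \<Rightarrow> real" and T :: nat
  assumes wf: "wf_pomdp P" and pv: "policy_valid T P pol"
begin

lemma finS: "finite (St P)" and finO: "finite (Ob P)" and finA: "finite (Ac P)"
  using wf by (auto simp: wf_pomdp_def)

lemma init_nn: "s \<in> St P \<Longrightarrow> init P s \<ge> 0"
  and emis_nn: "s \<in> St P \<Longrightarrow> ob \<in> Ob P \<Longrightarrow> emis P s ob \<ge> 0"
  and emis_sum: "s \<in> St P \<Longrightarrow> (\<Sum>ob\<in>Ob P. emis P s ob) = 1"
  and trans_nn: "s \<in> St P \<Longrightarrow> a \<in> Ac P \<Longrightarrow> s' \<in> St P \<Longrightarrow> trans P s a s' \<ge> 0"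
  and trans_sum: "s \<in> St P \<Longrightarrow> a \<in> Ac P \<Longrightarrow> (\<Sum>s'\<in>St P. trans P s a s') = 1"
  using wf by (auto simp: wf_pomdp_def)

lemma pol_nn: "1 \<le> t \<Longrightarrow> t \<le> T \<Longrightarrow> a \<in> Ac P \<Longrightarrow> pol t h a \<ge> 0"
  and pol_sum: "1 \<le> t \<Longrightarrow> t \<le> T \<Longrightarrow> (\<Sum>a\<in>Ac P. pol t h a) = 1"
  using pv unfolding policy_valid_def by (meson atLeastAtMost_iff)+

lemma Gp_nn:
  assumes "k \<le> T" "ss \<in> lists_len (St P) (Suc k)" "os \<in> lists_len (Ob P) k" "as \<in> lists_len (Ac P) k"
  shows "Gp P pol k ss os as \<ge> 0"
proof -
  have "\<And>t. t < Suc k \<Longrightarrow> ss ! t \<in> St P" "\<And>t. t < k \<Longrightarrow> os ! t \<in> Ob P" "\<And>t. t < k \<Longrightarrow> as ! t \<in> Ac P"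
    using assms by (auto intro: lists_len_nth)
  then show ?thesis unfolding Gp_def using assms
    by (intro mult_nonneg_nonneg prod_nonneg init_nn emis_nn trans_nn pol_nn) auto
qed

lemma tri_Suc': "tri P (Suc k) F = tri P k (\<lambda>ss os as. \<Sum>s\<in>St P. \<Sum>ob\<in>Ob P. \<Sum>a\<in>Ac P. F (ss @ [s]) (os @ [ob]) (as @ [a]))"
  by (rule tri_Suc[OF finS finO finA])

lemma marg:
  assumes "k \<le> n" "n \<le> T"
  shows "tri P n (\<lambda>ss os as. Gp P pol n ss os as * f (take (Suc k) ss) (take k os) (take k as))
       = tri P k (\<lambda>ss os as. Gp P pol k ss os as * f ss os as)"
  using assms
proof (induction n)
  case 0
  then have k0: "k = 0" by simp
  show ?case unfolding k0 by (intro tri_cong) (auto simp: lists_len_def)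
next
  case (Suc n)
  show ?case
  proof (cases "k = Suc n")
    case True
    show ?thesis unfolding True by (intro tri_cong) (auto simp: lists_len_def)
  next
    case False
    then have kn: "k \<le> n" using Suc by auto
    have "tri P (Suc n) (\<lambda>ss os as. Gp P pol (Suc n) ss os as * f (take (Suc k) ss) (take k os) (take k as))
      = tri P n (\<lambda>ss os as. \<Sum>s\<in>St P. \<Sum>ob\<in>Ob P. \<Sum>a\<in>Ac P.
          (Gp P pol n ss os as * f (take (Suc k) ss) (take k os) (take k as)) *
           (emis P (ss ! n) ob * pol (Suc n) (os @ [ob], as) a * trans P (ss ! n) a s))"
      unfolding tri_Suc'
      by (intro tri_cong sum.cong refl) (use kn in \<open>auto simp: Gp_snoc lists_len_def\<close>)
    also have "\<dots> = tri P n (\<lambda>ss os as. Gp P pol n ss os as * f (take (Suc k) ss) (take k os) (take k as))"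
    proof (intro tri_cong sum3_one finS finO finA)
      fix ss os as assume h: "ss \<in> lists_len (St P) (Suc n)" "os \<in> lists_len (Ob P) n" "as \<in> lists_len (Ac P) n"
      then have sn: "ss ! n \<in> St P" by (auto intro: lists_len_nth)
      show "(\<Sum>ob\<in>Ob P. emis P (ss ! n) ob) = 1" using sn emis_sum by auto
      show "(\<Sum>a\<in>Ac P. pol (Suc n) (os @ [ob], as) a) = 1" for ob using Suc.prems pol_sum by auto
      show "(\<Sum>s\<in>St P. trans P (ss ! n) a s) = 1" if "a \<in> Ac P" for a using sn that trans_sum by auto
    qed
    also have "\<dots> = tri P k (\<lambda>ss os as. Gp P pol k ss os as * f ss os as)"
      using Suc kn by auto
    finally show ?thesis .
  qed
qed


lemma tri_delta:
  "tri P i (\<lambda>ss os as. \<Sum>\<sigma>\<in>St P. if ss ! i = \<sigma> then H \<sigma> ss os as else 0) = tri P i (\<lambda>ss os as. H (ss ! i) ss os as)"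
proof (rule tri_cong)
  fix ss os as assume "ss \<in> lists_len (St P) (Suc i)"
  then have "ss ! i \<in> St P" by (auto intro: lists_len_nth)
  then show "(\<Sum>\<sigma>\<in>St P. if ss ! i = \<sigma> then H \<sigma> ss os as else 0) = H (ss ! i) ss os as"
    using finS by simp
qed

definition Bq where
  "Bq i \<sigma> = tri P i (\<lambda>ss os as. if ss ! i = \<sigma> then Gp P pol i ss os as else 0)"
definition Rq where
  "Rq i \<sigma> \<omega> \<alpha> = tri P i (\<lambda>ss os as. if ss ! i = \<sigma> then Gp P pol i ss os as * pol (Suc i) (os @ [\<omega>], as) \<alpha> else 0)"
definition Kq where
  "Kq j \<sigma>' \<alpha>' \<omega> \<alpha> = tri P j (\<lambda>ss os as. if ss ! j = \<sigma>' then
     (\<Sum>\<omega>'\<in>Ob P. Gp P pol j ss os as * emis P \<sigma>' \<omega>' * pol (Suc j) (os @ [\<omega>'], as) \<alpha>'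
        * pol (Suc (Suc j)) (os @ [\<omega>', \<omega>], as @ [\<alpha>']) \<alpha>) else 0)"

lemma Rq_nn: "i < T \<Longrightarrow> \<alpha> \<in> Ac P \<Longrightarrow> Rq i \<sigma> \<omega> \<alpha> \<ge> 0"
  unfolding Rq_def
  by (intro tri_nonneg) (auto intro!: mult_nonneg_nonneg Gp_nn pol_nn)

lemma Kq_nn: "Suc j < T \<Longrightarrow> \<alpha>' \<in> Ac P \<Longrightarrow> \<alpha> \<in> Ac P \<Longrightarrow> Kq j \<sigma>' \<alpha>' \<omega> \<alpha> \<ge> 0"
  unfolding Kq_def
proof (intro tri_nonneg)
  fix ss os as assume h: "Suc j < T" "\<alpha>' \<in> Ac P" "\<alpha> \<in> Ac P" "ss \<in> lists_len (St P) (Suc j)"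
    "os \<in> lists_len (Ob P) j" "as \<in> lists_len (Ac P) j"
  then have "ss ! j \<in> St P" by (auto intro: lists_len_nth)
  then show "0 \<le> (if ss ! j = \<sigma>' then
     (\<Sum>\<omega>'\<in>Ob P. Gp P pol j ss os as * emis P \<sigma>' \<omega>' * pol (Suc j) (os @ [\<omega>'], as) \<alpha>'
        * pol (Suc (Suc j)) (os @ [\<omega>', \<omega>], as @ [\<alpha>']) \<alpha>) else 0)"
    using h by (auto intro!: sum_nonneg mult_nonneg_nonneg Gp_nn pol_nn emis_nn)
qed

lemma Rq_sum: "i < T \<Longrightarrow> (\<Sum>\<alpha>\<in>Ac P. Rq i \<sigma> \<omega> \<alpha>) = Bq i \<sigma>"
  unfolding Rq_def Bq_def tri_sum[symmetric]
  by (intro tri_cong) (simp add: sum_if_const sum_distrib_left[symmetric] pol_sum)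

lemma Bq0: "\<sigma> \<in> St P \<Longrightarrow> Bq 0 \<sigma> = init P \<sigma>"
  unfolding Bq_def tri_def using finS
  apply (simp add: lists_len_Suc_sum Gp_def)
  apply (subst lists_len_0)+
  apply (simp add: Gp_def)
  done


lemma Bq_Suc:
  assumes "i < T" "\<sigma>' \<in> St P"
  shows "Bq (Suc i) \<sigma>' = (\<Sum>\<sigma>\<in>St P. \<Sum>\<alpha>\<in>Ac P. \<Sum>\<omega>\<in>Ob P. trans P \<sigma> \<alpha> \<sigma>' * emis P \<sigma> \<omega> * Rq i \<sigma> \<omega> \<alpha>)"
proof -
  have "Bq (Suc i) \<sigma>' = tri P i (\<lambda>ss os as. \<Sum>ob\<in>Ob P. \<Sum>a\<in>Ac P.
      Gp P pol i ss os as * (emis P (ss ! i) ob * pol (Suc i) (os @ [ob], as) a * trans P (ss ! i) a \<sigma>'))"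
    unfolding Bq_def tri_Suc'
  proof (rule tri_cong)
    fix ss os as assume h: "ss \<in> lists_len (St P) (Suc i)" "os \<in> lists_len (Ob P) i" "as \<in> lists_len (Ac P) i"
    then have l: "length ss = Suc i" "length os = i" "length as = i" by (auto simp: lists_len_def)
    show "(\<Sum>s\<in>St P. \<Sum>ob\<in>Ob P. \<Sum>a\<in>Ac P. if (ss @ [s]) ! Suc i = \<sigma>' then Gp P pol (Suc i) (ss @ [s]) (os @ [ob]) (as @ [a]) else 0)
      = (\<Sum>ob\<in>Ob P. \<Sum>a\<in>Ac P. Gp P pol i ss os as * (emis P (ss ! i) ob * pol (Suc i) (os @ [ob], as) a * trans P (ss ! i) a \<sigma>'))"
      using l assms finS by (simp add: Gp_snoc nth_append sum_if_const)
  qed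
  also have "\<dots> = (\<Sum>\<sigma>\<in>St P. \<Sum>\<alpha>\<in>Ac P. \<Sum>\<omega>\<in>Ob P. trans P \<sigma> \<alpha> \<sigma>' * emis P \<sigma> \<omega> * Rq i \<sigma> \<omega> \<alpha>)"
    unfolding Rq_def
    apply (simp only: tri_cmult[symmetric] tri_sum[symmetric])
    apply (simp only: mult_if0 sum_if_const tri_delta)
    apply (rule tri_cong)
    apply (subst sum.swap)
    apply (simp add: mult_ac)
    done
  finally show ?thesis .
qed

lemma Rq_Suc:
  assumes "Suc j < T" "\<sigma> \<in> St P"
  shows "Rq (Suc j) \<sigma> \<omega> \<alpha> = (\<Sum>\<sigma>'\<in>St P. \<Sum>\<alpha>'\<in>Ac P. trans P \<sigma>' \<alpha>' \<sigma> * Kq j \<sigma>' \<alpha>' \<omega> \<alpha>)"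
proof -
  have "Rq (Suc j) \<sigma> \<omega> \<alpha> = tri P j (\<lambda>ss os as. \<Sum>ob\<in>Ob P. \<Sum>a\<in>Ac P.
      Gp P pol j ss os as * (emis P (ss ! j) ob * pol (Suc j) (os @ [ob], as) a * trans P (ss ! j) a \<sigma>)
        * pol (Suc (Suc j)) (os @ [ob, \<omega>], as @ [a]) \<alpha>)"
    unfolding Rq_def tri_Suc'
  proof (rule tri_cong)
    fix ss os as assume h: "ss \<in> lists_len (St P) (Suc j)" "os \<in> lists_len (Ob P) j" "as \<in> lists_len (Ac P) j"
    then have l: "length ss = Suc j" "length os = j" "length as = j" by (auto simp: lists_len_def)
    show "(\<Sum>s\<in>St P. \<Sum>ob\<in>Ob P. \<Sum>a\<in>Ac P. if (ss @ [s]) ! Suc j = \<sigma> then Gp P pol (Suc j) (ss @ [s]) (os @ [ob]) (as @ [a])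
          * pol (Suc (Suc j)) ((os @ [ob]) @ [\<omega>], as @ [a]) \<alpha> else 0)
      = (\<Sum>ob\<in>Ob P. \<Sum>a\<in>Ac P. Gp P pol j ss os as * (emis P (ss ! j) ob * pol (Suc j) (os @ [ob], as) a * trans P (ss ! j) a \<sigma>)
        * pol (Suc (Suc j)) (os @ [ob, \<omega>], as @ [a]) \<alpha>)"
      using l assms finS by (simp add: Gp_snoc nth_append sum_if_const)
  qed
  also have "\<dots> = (\<Sum>\<sigma>'\<in>St P. \<Sum>\<alpha>'\<in>Ac P. trans P \<sigma>' \<alpha>' \<sigma> * Kq j \<sigma>' \<alpha>' \<omega> \<alpha>)"
    unfolding Kq_def
    apply (simp only: tri_cmult[symmetric] tri_sum[symmetric])
    apply (simp only: mult_if0 sum_if_const tri_delta)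
    apply (rule tri_cong)
    apply (simp add: sum_distrib_left)
    apply (subst sum.swap)
    apply (simp add: mult_ac)
    done
  finally show ?thesis .
qed

lemma Kq_sum:
  assumes "Suc j < T"
  shows "(\<Sum>\<alpha>\<in>Ac P. Kq j \<sigma>' \<alpha>' \<omega> \<alpha>) = (\<Sum>\<omega>'\<in>Ob P. emis P \<sigma>' \<omega>' * Rq j \<sigma>' \<omega>' \<alpha>')"
  unfolding Kq_def Rq_def
  apply (simp only: tri_cmult[symmetric] tri_sum[symmetric])
  apply (rule tri_cong)
  apply (simp add: sum_if_const mult_if0)
  apply (subst sum.swap)
  using pol_sum[of "Suc (Suc j)"] assms
  apply (simp add: sum_distrib_left[symmetric] mult_ac)
  done


lemma sum3_perm: "(\<Sum>x\<in>A. \<Sum>y\<in>B. \<Sum>z\<in>C. f x y z) = (\<Sum>z\<in>C. \<Sum>x\<in>A. \<Sum>y\<in>B. (f x y z :: real))"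
proof -
  have "(\<Sum>x\<in>A. \<Sum>y\<in>B. \<Sum>z\<in>C. f x y z) = (\<Sum>x\<in>A. \<Sum>z\<in>C. \<Sum>y\<in>B. f x y z)"
    by (intro sum.cong refl sum.swap)
  also have "\<dots> = (\<Sum>z\<in>C. \<Sum>x\<in>A. \<Sum>y\<in>B. f x y z)" by (rule sum.swap)
  finally show ?thesis .
qed

lemma his_step:
  assumes "i < T"
  shows "tri P T (\<lambda>ss os as. Gp P pol T ss os as * rew P (ss ! i) (as ! i) (ss ! Suc i))
    = (\<Sum>\<sigma>\<in>St P. \<Sum>\<alpha>\<in>Ac P. \<Sum>\<sigma>'\<in>St P. rew P \<sigma> \<alpha> \<sigma>' * trans P \<sigma> \<alpha> \<sigma>' * (\<Sum>\<omega>\<in>Ob P. emis P \<sigma> \<omega> * Rq i \<sigma> \<omega> \<alpha>))"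
proof -
  have "tri P T (\<lambda>ss os as. Gp P pol T ss os as * rew P (ss ! i) (as ! i) (ss ! Suc i))
     = tri P T (\<lambda>ss os as. Gp P pol T ss os as * (\<lambda>ps po pa. rew P (ps ! i) (pa ! i) (ps ! Suc i))
          (take (Suc (Suc i)) ss) (take (Suc i) os) (take (Suc i) as))"
    by (intro tri_cong) simp
  also have "\<dots> = tri P (Suc i) (\<lambda>ss os as. Gp P pol (Suc i) ss os as * rew P (ss ! i) (as ! i) (ss ! Suc i))"
    using assms by (subst marg) auto
  also have "\<dots> = tri P i (\<lambda>ss os as. \<Sum>s\<in>St P. \<Sum>ob\<in>Ob P. \<Sum>a\<in>Ac P.
      Gp P pol i ss os as * (emis P (ss ! i) ob * pol (Suc i) (os @ [ob], as) a * trans P (ss ! i) a s) * rew P (ss ! i) a s)"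
    unfolding tri_Suc'
  proof (rule tri_cong)
    fix ss os as assume h: "ss \<in> lists_len (St P) (Suc i)" "os \<in> lists_len (Ob P) i" "as \<in> lists_len (Ac P) i"
    then have l: "length ss = Suc i" "length os = i" "length as = i" by (auto simp: lists_len_def)
    show "(\<Sum>s\<in>St P. \<Sum>ob\<in>Ob P. \<Sum>a\<in>Ac P. Gp P pol (Suc i) (ss @ [s]) (os @ [ob]) (as @ [a]) *
            rew P ((ss @ [s]) ! i) ((as @ [a]) ! i) ((ss @ [s]) ! Suc i)) =
      (\<Sum>s\<in>St P. \<Sum>ob\<in>Ob P. \<Sum>a\<in>Ac P.
      Gp P pol i ss os as * (emis P (ss ! i) ob * pol (Suc i) (os @ [ob], as) a * trans P (ss ! i) a s) * rew P (ss ! i) a s)"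
      using l by (simp add: Gp_snoc nth_append)
  qed
  also have "\<dots> = (\<Sum>\<sigma>\<in>St P. \<Sum>\<alpha>\<in>Ac P. \<Sum>\<sigma>'\<in>St P. rew P \<sigma> \<alpha> \<sigma>' * trans P \<sigma> \<alpha> \<sigma>' * (\<Sum>\<omega>\<in>Ob P. emis P \<sigma> \<omega> * Rq i \<sigma> \<omega> \<alpha>))"
    unfolding Rq_def
    apply (simp only: sum_distrib_left mult.assoc[symmetric])
    apply (simp only: tri_cmult[symmetric] tri_sum[symmetric])
    apply (simp only: mult_if0 sum_if_const tri_delta)
    apply (rule tri_cong)
    apply (subst sum3_perm)
    apply (intro sum.cong refl)
    apply (simp add: mult_ac)
    done
  finally show ?thesis .
qed

lemma his_value_eq:
  "his_value T P pol = (\<Sum>i<T. \<Sum>\<sigma>\<in>St P. \<Sum>\<alpha>\<in>Ac P. \<Sum>\<sigma>'\<in>St P.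
      rew P \<sigma> \<alpha> \<sigma>' * trans P \<sigma> \<alpha> \<sigma>' * (\<Sum>\<omega>\<in>Ob P. emis P \<sigma> \<omega> * Rq i \<sigma> \<omega> \<alpha>))"
proof -
  have "his_value T P pol = tri P T (\<lambda>ss os as. \<Sum>i<T. Gp P pol T ss os as * rew P (ss ! i) (as ! i) (ss ! Suc i))"
    unfolding his_value_def tri_def traj_prob_Gp by (simp add: sum_distrib_left)
  also have "\<dots> = (\<Sum>i<T. tri P T (\<lambda>ss os as. Gp P pol T ss os as * rew P (ss ! i) (as ! i) (ss ! Suc i)))"
    by (rule tri_sum)
  also have "\<dots> = (\<Sum>i<T. \<Sum>\<sigma>\<in>St P. \<Sum>\<alpha>\<in>Ac P. \<Sum>\<sigma>'\<in>St P.
      rew P \<sigma> \<alpha> \<sigma>' * trans P \<sigma> \<alpha> \<sigma>' * (\<Sum>\<omega>\<in>Ob P. emis P \<sigma> \<omega> * Rq i \<sigma> \<omega> \<alpha>))"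
    by (intro sum.cong refl his_step) simp
  finally show ?thesis .
qed

end

declare if_cong[cong]

lemma sum3_in: "(\<Sum>x\<in>X. \<Sum>s\<in>A. \<Sum>a\<in>B. \<Sum>s'\<in>E. f x s a s') = (\<Sum>s\<in>A. \<Sum>a\<in>B. \<Sum>s'\<in>E. \<Sum>x\<in>X. (f x s a s' :: real))"
proof -
  have "(\<Sum>x\<in>X. \<Sum>s\<in>A. \<Sum>a\<in>B. \<Sum>s'\<in>E. f x s a s') = (\<Sum>s\<in>A. \<Sum>x\<in>X. \<Sum>a\<in>B. \<Sum>s'\<in>E. f x s a s')"
    by (rule sum.swap)
  also have "\<dots> = (\<Sum>s\<in>A. \<Sum>a\<in>B. \<Sum>x\<in>X. \<Sum>s'\<in>E. f x s a s')"
    by (intro sum.cong refl sum.swap)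
  also have "\<dots> = (\<Sum>s\<in>A. \<Sum>a\<in>B. \<Sum>s'\<in>E. \<Sum>x\<in>X. f x s a s')"
    by (intro sum.cong refl sum.swap)
  finally show ?thesis .
qed

lemma sum3_perm': "(\<Sum>x\<in>A. \<Sum>y\<in>B. \<Sum>z\<in>E. f x y z) = (\<Sum>z\<in>E. \<Sum>x\<in>A. \<Sum>y\<in>B. (f x y z :: real))"
proof -
  have "(\<Sum>x\<in>A. \<Sum>y\<in>B. \<Sum>z\<in>E. f x y z) = (\<Sum>x\<in>A. \<Sum>z\<in>E. \<Sum>y\<in>B. f x y z)"
    by (intro sum.cong refl sum.swap)
  also have "\<dots> = (\<Sum>z\<in>E. \<Sum>x\<in>A. \<Sum>y\<in>B. f x y z)" by (rule sum.swap)
  finally show ?thesis .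
qed

lemma dl_lemma:
  fixes \<tau> :: "'x \<Rightarrow> 'y \<Rightarrow> real" and E :: "'x \<Rightarrow> real"
  assumes fin: "finite S" "finite A" "A \<noteq> {}"
    and nn: "\<And>\<sigma> \<alpha>. \<sigma> \<in> S \<Longrightarrow> \<alpha> \<in> A \<Longrightarrow> \<tau> \<sigma> \<alpha> \<ge> 0"
    and sE: "\<And>\<sigma>. \<sigma> \<in> S \<Longrightarrow> (\<Sum>\<alpha>\<in>A. \<tau> \<sigma> \<alpha>) = E \<sigma>"
    and c1: "(\<Sum>\<sigma>\<in>S. E \<sigma>) \<le> 1"
  defines "d \<equiv> \<lambda>\<alpha>. (\<Sum>\<sigma>\<in>S. \<tau> \<sigma> \<alpha>) + (1 - (\<Sum>\<sigma>\<in>S. E \<sigma>)) / real (card A)"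
  shows "\<alpha> \<in> A \<Longrightarrow> 0 \<le> d \<alpha>" "\<alpha> \<in> A \<Longrightarrow> d \<alpha> \<le> 1" "(\<Sum>\<alpha>\<in>A. d \<alpha>) = 1"
    "\<sigma> \<in> S \<Longrightarrow> \<alpha> \<in> A \<Longrightarrow> \<tau> \<sigma> \<alpha> \<le> d \<alpha>"
    "\<sigma> \<in> S \<Longrightarrow> \<alpha> \<in> A \<Longrightarrow> E \<sigma> + d \<alpha> - 1 \<le> \<tau> \<sigma> \<alpha>"
proof -
  define c where "c = (\<Sum>\<sigma>\<in>S. E \<sigma>)"
  have n1: "real (card A) \<ge> 1" using fin by (simp add: Suc_le_eq card_gt_0_iff)
  have q0: "(1 - c) / real (card A) \<ge> 0" using c1 n1 by (simp add: c_def)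
  have q1: "(1 - c) / real (card A) \<le> 1 - c"
  proof -
    have "(1 - c) / real (card A) \<le> (1 - c) / 1"
      by (rule divide_left_mono) (use c1 n1 in \<open>auto simp: c_def\<close>)
    then show ?thesis by simp
  qed
  have le: "\<tau> \<sigma> \<alpha> \<le> E \<sigma>" if "\<sigma> \<in> S" "\<alpha> \<in> A" for \<sigma> \<alpha>
    using member_le_sum[of \<alpha> A "\<tau> \<sigma>"] that fin nn sE by auto
  show "0 \<le> d \<alpha>" if "\<alpha> \<in> A" for \<alpha>
    using that q0 nn by (auto simp: d_def c_def intro!: add_nonneg_nonneg sum_nonneg)
  show "d \<alpha> \<le> 1" if "\<alpha> \<in> A" for \<alpha>
  proof -
    have "(\<Sum>\<sigma>\<in>S. \<tau> \<sigma> \<alpha>) \<le> c" unfolding c_def using le that by (intro sum_mono) auto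
    then show ?thesis using q1 by (simp add: d_def c_def)
  qed
  show "(\<Sum>\<alpha>\<in>A. d \<alpha>) = 1"
  proof -
    have "(\<Sum>\<alpha>\<in>A. \<Sum>\<sigma>\<in>S. \<tau> \<sigma> \<alpha>) = c" unfolding c_def using sE by (subst sum.swap) simp
    moreover have "(\<Sum>\<alpha>\<in>A. (1 - c) / real (card A)) = 1 - c" using n1 by simp
    ultimately show ?thesis by (simp add: d_def c_def[symmetric] sum.distrib)
  qed
  show "\<tau> \<sigma> \<alpha> \<le> d \<alpha>" if "\<sigma> \<in> S" "\<alpha> \<in> A" for \<sigma> \<alpha>
  proof -
    have "\<tau> \<sigma> \<alpha> \<le> (\<Sum>\<sigma>\<in>S. \<tau> \<sigma> \<alpha>)" using that fin nn by (intro member_le_sum) auto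
    then show ?thesis using q0 by (simp add: d_def c_def)
  qed
  show "E \<sigma> + d \<alpha> - 1 \<le> \<tau> \<sigma> \<alpha>" if "\<sigma> \<in> S" "\<alpha> \<in> A" for \<sigma> \<alpha>
  proof -
    have "(\<Sum>\<sigma>'\<in>S. \<tau> \<sigma>' \<alpha>) = \<tau> \<sigma> \<alpha> + (\<Sum>\<sigma>'\<in>S-{\<sigma>}. \<tau> \<sigma>' \<alpha>)" using that fin by (simp add: sum.remove)
    moreover have "c = E \<sigma> + (\<Sum>\<sigma>'\<in>S-{\<sigma>}. E \<sigma>')" using that fin by (simp add: sum.remove c_def)
    moreover have "(\<Sum>\<sigma>'\<in>S-{\<sigma>}. \<tau> \<sigma>' \<alpha>) \<le> (\<Sum>\<sigma>'\<in>S-{\<sigma>}. E \<sigma>')" using le that by (intro sum_mono) auto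
    ultimately show ?thesis using q1 by (simp add: d_def c_def[symmetric])
  qed
qed

locale wcp =
  fixes C :: "nat \<Rightarrow> ('s, 'o, 'a) pomdp" and M q :: nat and D :: "nat \<Rightarrow> 'a \<Rightarrow> nat \<Rightarrow> real" and b :: "nat \<Rightarrow> real"
  assumes wfc: "\<forall>m<M. wf_pomdp (C m)" and bnn: "\<forall>j<q. b j \<ge> 0" and Acne: "Ac (joint C M q D b) \<noteq> {}"
begin

abbreviation "J \<equiv> joint C M q D b"

lemma wfJ: "wf_pomdp J" using wf_joint wfc by blast

lemma fSJ: "finite (St J)" and fOJ: "finite (Ob J)" and fAJ: "finite (Ac J)"
  using wfJ by (auto simp: wf_pomdp_def simp del: joint_sel)

lemma wfm: "m < M \<Longrightarrow> wf_pomdp (C m)" using wfc by blast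

lemma fS: "m < M \<Longrightarrow> finite (St (C m))" and fO: "m < M \<Longrightarrow> finite (Ob (C m))" and fA: "m < M \<Longrightarrow> finite (Ac (C m))"
  using wfm by (auto simp: wf_pomdp_def)

lemma SJm: "s \<in> St J \<Longrightarrow> m < M \<Longrightarrow> s m \<in> St (C m)"
  and OJm: "o' \<in> Ob J \<Longrightarrow> m < M \<Longrightarrow> o' m \<in> Ob (C m)"
  and AJm: "a \<in> Ac J \<Longrightarrow> m < M \<Longrightarrow> a m \<in> Ac (C m)"
  by (auto simp: PiE_lessD)

lemma AJ_PiE: "a \<in> Ac J \<Longrightarrow> a \<in> PiE {..<M} (\<lambda>m. Ac (C m))" by simp

lemma Acm_ne: "m < M \<Longrightarrow> Ac (C m) \<noteq> {}"
  using Acne AJm by blast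

end

locale occ = wcp C M q D b for C :: "nat \<Rightarrow> ('s, 'o, 'a) pomdp" and M q D b +
  fixes T :: nat
    and X :: "nat \<Rightarrow> (nat \<Rightarrow> 's) \<Rightarrow> (nat \<Rightarrow> 'o) \<Rightarrow> (nat \<Rightarrow> 'a) \<Rightarrow> real"
    and Y :: "nat \<Rightarrow> (nat \<Rightarrow> 's) \<Rightarrow> (nat \<Rightarrow> 'a) \<Rightarrow> (nat \<Rightarrow> 's) \<Rightarrow> real"
  assumes Xnn: "t \<in> {1..T} \<Longrightarrow> s \<in> St J \<Longrightarrow> o' \<in> Ob J \<Longrightarrow> a \<in> Ac J \<Longrightarrow> X t s o' a \<ge> 0"
    and Ynn: "t \<in> {1..T} \<Longrightarrow> s \<in> St J \<Longrightarrow> a \<in> Ac J \<Longrightarrow> s' \<in> St J \<Longrightarrow> Y t s a s' \<ge> 0"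
    and J2: "t \<in> {1..T} \<Longrightarrow> s \<in> St J \<Longrightarrow> (\<Sum>o'\<in>Ob J. \<Sum>a\<in>Ac J. X t s o' a) =
       (if t = 1 then init J s else (\<Sum>s''\<in>St J. \<Sum>a''\<in>Ac J. Y (t - 1) s'' a'' s))"
    and J3: "t \<in> {1..T} \<Longrightarrow> s \<in> St J \<Longrightarrow> a \<in> Ac J \<Longrightarrow> (\<Sum>s'\<in>St J. Y t s a s') = (\<Sum>o'\<in>Ob J. X t s o' a)"
    and J4: "t \<in> {1..T} \<Longrightarrow> s \<in> St J \<Longrightarrow> a \<in> Ac J \<Longrightarrow> s' \<in> St J \<Longrightarrow> Y t s a s' = trans J s a s' * (\<Sum>sb\<in>St J. Y t s a sb)"
    and J5: "t \<in> {1..T} \<Longrightarrow> s \<in> St J \<Longrightarrow> o' \<in> Ob J \<Longrightarrow>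
       (\<Sum>a\<in>Ac J. X t s o' a) = emis J s o' * (\<Sum>o''\<in>Ob J. \<Sum>a\<in>Ac J. X t s o'' a)"
begin

definition NJ where "NJ t s = (if t = 1 then init J s else (\<Sum>s''\<in>St J. \<Sum>a''\<in>Ac J. Y (t - 1) s'' a'' s))"

lemma NJ_nn: "t \<in> {1..T} \<Longrightarrow> s \<in> St J \<Longrightarrow> NJ t s \<ge> 0"
  using wfJ unfolding NJ_def wf_pomdp_def
  by (auto intro!: sum_nonneg Ynn simp del: joint_sel)

lemma mass: "t \<in> {1..T} \<Longrightarrow> (\<Sum>s\<in>St J. NJ t s) = 1"
proof (induction t)
  case 0 then show ?case by simp
next
  case (Suc t)
  show ?case
  proof (cases "t = 0")
    case True
    then show ?thesis using wfJ unfolding NJ_def wf_pomdp_def by (simp del: joint_sel)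
  next
    case False
    then have t1: "t \<in> {1..T}" using Suc by auto
    have "(\<Sum>s\<in>St J. NJ (Suc t) s) = (\<Sum>s\<in>St J. \<Sum>s''\<in>St J. \<Sum>a''\<in>Ac J. Y t s'' a'' s)"
      using False by (simp add: NJ_def del: joint_sel)
    also have "\<dots> = (\<Sum>s''\<in>St J. \<Sum>a''\<in>Ac J. \<Sum>s\<in>St J. Y t s'' a'' s)"
      by (subst sum.swap, intro sum.cong refl sum.swap)
    also have "\<dots> = (\<Sum>s''\<in>St J. \<Sum>a''\<in>Ac J. \<Sum>o'\<in>Ob J. X t s'' o' a'')"
      using t1 by (intro sum.cong refl J3) auto
    also have "\<dots> = (\<Sum>s''\<in>St J. \<Sum>o'\<in>Ob J. \<Sum>a''\<in>Ac J. X t s'' o' a'')"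
      by (intro sum.cong refl sum.swap)
    also have "\<dots> = (\<Sum>s''\<in>St J. NJ t s'')"
      using t1 by (intro sum.cong refl) (simp add: J2 NJ_def del: joint_sel)
    also have "\<dots> = 1" using Suc.IH t1 by simp
    finally show ?thesis .
  qed
qed

definition taut where
  "taut m t \<sigma> \<alpha> \<sigma>' = (\<Sum>s\<in>St J. \<Sum>a\<in>Ac J. \<Sum>s'\<in>St J.
     if s m = \<sigma> then if a m = \<alpha> then if s' m = \<sigma>' then Y t s a s' else 0 else 0 else 0)"

definition tauo where
  "tauo m t \<sigma> \<omega> \<alpha> = (\<Sum>s\<in>St J. \<Sum>o'\<in>Ob J. \<Sum>a\<in>Ac J.
     if s m = \<sigma> then if o' m = \<omega> then if a m = \<alpha> then X t s o' a else 0 else 0 else 0)"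

definition nuc where "nuc m t \<sigma> = (\<Sum>s\<in>St J. if s m = \<sigma> then NJ t s else 0)"

lemma nuQ_eq:
  assumes m: "m < M" and t: "t \<in> {1..T}" and \<sigma>: "\<sigma> \<in> St (C m)"
  shows "nuQ (C m) (init (C m)) (taut m) t \<sigma> = nuc m t \<sigma>"
proof (cases "t = 1")
  case True
  have "nuc m t \<sigma> = (\<Sum>s\<in>PiE {..<M} (\<lambda>m. St (C m)). if s m = \<sigma> then \<Prod>k\<in>{..<M}. init (C k) (s k) else 0)"
    using True by (simp add: nuc_def NJ_def cong: if_cong)
  also have "\<dots> = init (C m) \<sigma>"
    by (rule sum_PiE_marg1) (use m \<sigma> wfc in \<open>auto simp: wf_pomdp_def\<close>)
  finally show ?thesis using True by (simp add: nuQ_def)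
next
  case False
  have "nuQ (C m) (init (C m)) (taut m) t \<sigma> = (\<Sum>\<sigma>''\<in>St (C m). \<Sum>\<alpha>''\<in>Ac (C m). \<Sum>s\<in>St J. \<Sum>a\<in>Ac J. \<Sum>s'\<in>St J.
     if s m = \<sigma>'' then if a m = \<alpha>'' then if s' m = \<sigma> then Y (t - 1) s a s' else 0 else 0 else 0)"
    using False by (simp add: nuQ_def taut_def del: joint_sel)
  also have "\<dots> = (\<Sum>\<sigma>''\<in>St (C m). \<Sum>s\<in>St J. \<Sum>a\<in>Ac J. \<Sum>s'\<in>St J. \<Sum>\<alpha>''\<in>Ac (C m).
     if s m = \<sigma>'' then if a m = \<alpha>'' then if s' m = \<sigma> then Y (t - 1) s a s' else 0 else 0 else 0)"
    by (intro sum.cong refl sum3_in)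
  also have "\<dots> = (\<Sum>s\<in>St J. \<Sum>a\<in>Ac J. \<Sum>s'\<in>St J. \<Sum>\<sigma>''\<in>St (C m). \<Sum>\<alpha>''\<in>Ac (C m).
     if s m = \<sigma>'' then if a m = \<alpha>'' then if s' m = \<sigma> then Y (t - 1) s a s' else 0 else 0 else 0)"
    by (rule sum3_in)
  also have "\<dots> = (\<Sum>s\<in>St J. \<Sum>a\<in>Ac J. \<Sum>s'\<in>St J. if s' m = \<sigma> then Y (t - 1) s a s' else 0)"
    using m fS fA by (intro sum.cong refl) (simp add: sum_if_const SJm AJm del: joint_sel)
  also have "\<dots> = (\<Sum>s'\<in>St J. \<Sum>s\<in>St J. \<Sum>a\<in>Ac J. if s' m = \<sigma> then Y (t - 1) s a s' else 0)"
    by (rule sum3_perm')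
  also have "\<dots> = nuc m t \<sigma>"
    using False by (simp add: nuc_def NJ_def sum_if_const del: joint_sel)
  finally show ?thesis .
qed


lemma tauo_sum_all:
  assumes m: "m < M" and t: "t \<in> {1..T}" and \<sigma>: "\<sigma> \<in> St (C m)"
  shows "(\<Sum>\<omega>\<in>Ob (C m). \<Sum>\<alpha>\<in>Ac (C m). tauo m t \<sigma> \<omega> \<alpha>) = nuc m t \<sigma>"
proof -
  have "(\<Sum>\<omega>\<in>Ob (C m). \<Sum>\<alpha>\<in>Ac (C m). tauo m t \<sigma> \<omega> \<alpha>) = (\<Sum>\<omega>\<in>Ob (C m). \<Sum>s\<in>St J. \<Sum>o'\<in>Ob J. \<Sum>a\<in>Ac J. \<Sum>\<alpha>\<in>Ac (C m).
     if s m = \<sigma> then if o' m = \<omega> then if a m = \<alpha> then X t s o' a else 0 else 0 else 0)"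
    unfolding tauo_def by (intro sum.cong refl sum3_in)
  also have "\<dots> = (\<Sum>s\<in>St J. \<Sum>o'\<in>Ob J. \<Sum>a\<in>Ac J. \<Sum>\<omega>\<in>Ob (C m). \<Sum>\<alpha>\<in>Ac (C m).
     if s m = \<sigma> then if o' m = \<omega> then if a m = \<alpha> then X t s o' a else 0 else 0 else 0)"
    by (rule sum3_in)
  also have "\<dots> = (\<Sum>s\<in>St J. if s m = \<sigma> then (\<Sum>o'\<in>Ob J. \<Sum>a\<in>Ac J. X t s o' a) else 0)"
    using m fO fA by (simp add: sum_if_const SJm OJm AJm del: joint_sel)
  also have "\<dots> = nuc m t \<sigma>"
    unfolding nuc_def using t by (intro sum.cong refl) (simp add: J2 NJ_def del: joint_sel)
  finally show ?thesis .
qed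

lemma taut_sum3:
  assumes m: "m < M"
  shows "(\<Sum>\<sigma>'\<in>St (C m). taut m t \<sigma> \<alpha> \<sigma>') =
     (\<Sum>s\<in>St J. \<Sum>a\<in>Ac J. if s m = \<sigma> then if a m = \<alpha> then (\<Sum>s'\<in>St J. Y t s a s') else 0 else 0)"
proof -
  have "(\<Sum>\<sigma>'\<in>St (C m). taut m t \<sigma> \<alpha> \<sigma>') = (\<Sum>s\<in>St J. \<Sum>a\<in>Ac J. \<Sum>s'\<in>St J. \<Sum>\<sigma>'\<in>St (C m).
     if s m = \<sigma> then if a m = \<alpha> then if s' m = \<sigma>' then Y t s a s' else 0 else 0 else 0)"
    unfolding taut_def by (rule sum3_in)
  also have "\<dots> = (\<Sum>s\<in>St J. \<Sum>a\<in>Ac J. if s m = \<sigma> then if a m = \<alpha> then (\<Sum>s'\<in>St J. Y t s a s') else 0 else 0)"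
    using m fS by (simp add: sum_if_const SJm del: joint_sel)
  finally show ?thesis .
qed

lemma tauo_sum2:
  assumes m: "m < M"
  shows "(\<Sum>\<omega>\<in>Ob (C m). tauo m t \<sigma> \<omega> \<alpha>) =
     (\<Sum>s\<in>St J. \<Sum>a\<in>Ac J. if s m = \<sigma> then if a m = \<alpha> then (\<Sum>o'\<in>Ob J. X t s o' a) else 0 else 0)"
proof -
  have "(\<Sum>\<omega>\<in>Ob (C m). tauo m t \<sigma> \<omega> \<alpha>) = (\<Sum>s\<in>St J. \<Sum>o'\<in>Ob J. \<Sum>a\<in>Ac J. \<Sum>\<omega>\<in>Ob (C m).
     if s m = \<sigma> then if o' m = \<omega> then if a m = \<alpha> then X t s o' a else 0 else 0 else 0)"
    unfolding tauo_def by (rule sum3_in)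
  also have "\<dots> = (\<Sum>s\<in>St J. \<Sum>o'\<in>Ob J. \<Sum>a\<in>Ac J. if s m = \<sigma> then if a m = \<alpha> then X t s o' a else 0 else 0)"
    using m fO by (simp add: sum_if_const OJm del: joint_sel)
  also have "\<dots> = (\<Sum>s\<in>St J. \<Sum>a\<in>Ac J. \<Sum>o'\<in>Ob J. if s m = \<sigma> then if a m = \<alpha> then X t s o' a else 0 else 0)"
    by (intro sum.cong refl sum.swap)
  also have "\<dots> = (\<Sum>s\<in>St J. \<Sum>a\<in>Ac J. if s m = \<sigma> then if a m = \<alpha> then (\<Sum>o'\<in>Ob J. X t s o' a) else 0 else 0)"
    by (simp add: sum_if_const del: joint_sel)
  finally show ?thesis .
qed

lemma taut_trans:
  assumes m: "m < M" and t: "t \<in> {1..T}" and \<sigma>': "\<sigma>' \<in> St (C m)"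
  shows "taut m t \<sigma> \<alpha> \<sigma>' = trans (C m) \<sigma> \<alpha> \<sigma>' * (\<Sum>sb\<in>St (C m). taut m t \<sigma> \<alpha> sb)"
proof -
  have "taut m t \<sigma> \<alpha> \<sigma>' = (\<Sum>s\<in>St J. \<Sum>a\<in>Ac J. if s m = \<sigma> then if a m = \<alpha> then
        trans (C m) \<sigma> \<alpha> \<sigma>' * (\<Sum>s'\<in>St J. Y t s a s') else 0 else 0)"
    unfolding taut_def
  proof (intro sum.cong refl)
    fix s a assume s: "s \<in> St J" and a: "a \<in> Ac J"
    have sk: "\<And>k. k < M \<Longrightarrow> s k \<in> St (C k)" and ak: "\<And>k. k < M \<Longrightarrow> a k \<in> Ac (C k)" using s a SJm AJm by auto
    have marg: "(\<Sum>s'\<in>St J. if s' m = \<sigma>' then trans J s a s' else 0) = trans (C m) (s m) (a m) \<sigma>'"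
      unfolding joint_sel
      by (rule sum_PiE_marg1) (use m \<sigma>' wfc sk ak in \<open>auto simp: wf_pomdp_def\<close>)
    have "(\<Sum>s'\<in>St J. if s' m = \<sigma>' then Y t s a s' else 0) =
        (\<Sum>s'\<in>St J. (\<Sum>sb\<in>St J. Y t s a sb) * (if s' m = \<sigma>' then trans J s a s' else 0))"
      using J4[OF t s a] by (intro sum.cong refl) (simp del: joint_sel)
    also have "\<dots> = trans (C m) (s m) (a m) \<sigma>' * (\<Sum>sb\<in>St J. Y t s a sb)"
      by (simp only: sum_distrib_left[symmetric] marg mult.commute)
    finally show "(\<Sum>s'\<in>St J. if s m = \<sigma> then if a m = \<alpha> then if s' m = \<sigma>' then Y t s a s' else 0 else 0 else 0) =
        (if s m = \<sigma> then if a m = \<alpha> then trans (C m) \<sigma> \<alpha> \<sigma>' * (\<Sum>s'\<in>St J. Y t s a s') else 0 else 0)"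
      by (simp add: sum_if_const del: joint_sel)
  qed
  also have "\<dots> = trans (C m) \<sigma> \<alpha> \<sigma>' * (\<Sum>sb\<in>St (C m). taut m t \<sigma> \<alpha> sb)"
    unfolding taut_sum3[OF m] by (simp add: sum_distrib_left mult_if0 del: joint_sel)
  finally show ?thesis .
qed

lemma tauo_emis:
  assumes m: "m < M" and t: "t \<in> {1..T}" and \<omega>: "\<omega> \<in> Ob (C m)"
  shows "(\<Sum>\<alpha>\<in>Ac (C m). tauo m t \<sigma> \<omega> \<alpha>) = emis (C m) \<sigma> \<omega> * nuc m t \<sigma>"
proof -
  have "(\<Sum>\<alpha>\<in>Ac (C m). tauo m t \<sigma> \<omega> \<alpha>) = (\<Sum>s\<in>St J. \<Sum>o'\<in>Ob J. \<Sum>a\<in>Ac J. \<Sum>\<alpha>\<in>Ac (C m).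
     if s m = \<sigma> then if o' m = \<omega> then if a m = \<alpha> then X t s o' a else 0 else 0 else 0)"
    unfolding tauo_def by (rule sum3_in)
  also have "\<dots> = (\<Sum>s\<in>St J. if s m = \<sigma> then (\<Sum>o'\<in>Ob J. if o' m = \<omega> then (\<Sum>a\<in>Ac J. X t s o' a) else 0) else 0)"
    using m fA by (simp add: sum_if_const AJm del: joint_sel)
  also have "\<dots> = (\<Sum>s\<in>St J. if s m = \<sigma> then emis (C m) \<sigma> \<omega> * NJ t s else 0)"
  proof (intro sum.cong refl)
    fix s assume s: "s \<in> St J"
    have sk: "\<And>k. k < M \<Longrightarrow> s k \<in> St (C k)" using s SJm by auto
    have marg: "(\<Sum>o'\<in>Ob J. if o' m = \<omega> then emis J s o' else 0) = emis (C m) (s m) \<omega>"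
      unfolding joint_sel
      by (rule sum_PiE_marg1) (use m \<omega> wfc sk in \<open>auto simp: wf_pomdp_def\<close>)
    have "(\<Sum>o'\<in>Ob J. if o' m = \<omega> then (\<Sum>a\<in>Ac J. X t s o' a) else 0) =
          (\<Sum>o'\<in>Ob J. NJ t s * (if o' m = \<omega> then emis J s o' else 0))"
      using J5[OF t s] J2[OF t s] by (intro sum.cong refl) (simp add: NJ_def del: joint_sel)
    also have "\<dots> = emis (C m) (s m) \<omega> * NJ t s"
      by (simp only: sum_distrib_left[symmetric] marg mult.commute)
    finally show "(if s m = \<sigma> then (\<Sum>o'\<in>Ob J. if o' m = \<omega> then (\<Sum>a\<in>Ac J. X t s o' a) else 0) else 0) =
        (if s m = \<sigma> then emis (C m) \<sigma> \<omega> * NJ t s else 0)" by simp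
  qed
  also have "\<dots> = emis (C m) \<sigma> \<omega> * nuc m t \<sigma>"
    unfolding nuc_def by (simp add: sum_distrib_left mult_if0 del: joint_sel)
  finally show ?thesis .
qed

lemma nuc_nn: "t \<in> {1..T} \<Longrightarrow> nuc m t \<sigma> \<ge> 0"
  unfolding nuc_def by (auto intro!: sum_nonneg NJ_nn simp del: joint_sel)

lemma nuc_mass: assumes m: "m < M" and t: "t \<in> {1..T}" shows "(\<Sum>\<sigma>\<in>St (C m). nuc m t \<sigma>) = 1"
proof -
  have "(\<Sum>\<sigma>\<in>St (C m). nuc m t \<sigma>) = (\<Sum>s\<in>St J. \<Sum>\<sigma>\<in>St (C m). if s m = \<sigma> then NJ t s else 0)"
    unfolding nuc_def by (rule sum.swap)
  also have "\<dots> = (\<Sum>s\<in>St J. NJ t s)" using m fS by (simp add: SJm del: joint_sel)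
  finally show ?thesis using mass t by simp
qed

lemma taut_nn: "t \<in> {1..T} \<Longrightarrow> taut m t \<sigma> \<alpha> \<sigma>' \<ge> 0"
  unfolding taut_def by (auto intro!: sum_nonneg Ynn simp del: joint_sel)

lemma tauo_nn: "t \<in> {1..T} \<Longrightarrow> tauo m t \<sigma> \<omega> \<alpha> \<ge> 0"
  unfolding tauo_def by (auto intro!: sum_nonneg Xnn simp del: joint_sel)

end

lemma sum5_in: "(\<Sum>x\<in>X. \<Sum>a\<in>A. \<Sum>b\<in>B. \<Sum>c\<in>E. \<Sum>d\<in>F. \<Sum>e\<in>G. f x a b c d e)
  = (\<Sum>a\<in>A. \<Sum>b\<in>B. \<Sum>c\<in>E. \<Sum>d\<in>F. \<Sum>e\<in>G. \<Sum>x\<in>X. (f x a b c d e :: real))"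
proof -
  have "(\<Sum>x\<in>X. \<Sum>a\<in>A. \<Sum>b\<in>B. \<Sum>c\<in>E. \<Sum>d\<in>F. \<Sum>e\<in>G. f x a b c d e)
     = (\<Sum>a\<in>A. \<Sum>b\<in>B. \<Sum>x\<in>X. \<Sum>c\<in>E. \<Sum>d\<in>F. \<Sum>e\<in>G. f x a b c d e)"
    by (subst sum.swap, intro sum.cong refl sum.swap)
  also have "\<dots> = (\<Sum>a\<in>A. \<Sum>b\<in>B. \<Sum>c\<in>E. \<Sum>d\<in>F. \<Sum>e\<in>G. \<Sum>x\<in>X. f x a b c d e)"
    by (intro sum.cong refl sum3_in)
  finally show ?thesis .
qed

lemma collapse2:
  assumes "\<And>u. u \<in> U \<Longrightarrow> g u \<in> A" "\<And>v. v \<in> V \<Longrightarrow> h v \<in> B" "finite A" "finite B"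
  shows "(\<Sum>x\<in>A. \<Sum>y\<in>B. \<Sum>u\<in>U. \<Sum>v\<in>V. if g u = x then if h v = y then H u v else 0 else 0) = (\<Sum>u\<in>U. \<Sum>v\<in>V. (H u v :: real))"
proof -
  have "(\<Sum>x\<in>A. \<Sum>y\<in>B. \<Sum>u\<in>U. \<Sum>v\<in>V. if g u = x then if h v = y then H u v else 0 else 0)
     = (\<Sum>x\<in>A. \<Sum>u\<in>U. \<Sum>v\<in>V. \<Sum>y\<in>B. if g u = x then if h v = y then H u v else 0 else 0)"
    by (intro sum.cong refl) (subst sum.swap, intro sum.cong refl sum.swap)
  also have "\<dots> = (\<Sum>u\<in>U. \<Sum>v\<in>V. \<Sum>x\<in>A. \<Sum>y\<in>B. if g u = x then if h v = y then H u v else 0 else 0)"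
    by (subst sum.swap, intro sum.cong refl sum.swap)
  also have "\<dots> = (\<Sum>u\<in>U. \<Sum>v\<in>V. H u v)"
    using assms by (intro sum.cong refl) (simp add: sum_if_const)
  finally show ?thesis .
qed

context occ
begin

definition dlc where
  "dlc m t \<omega> \<alpha> = (\<Sum>\<sigma>\<in>St (C m). tauo m t \<sigma> \<omega> \<alpha>) +
     (1 - (\<Sum>\<sigma>\<in>St (C m). emis (C m) \<sigma> \<omega> * nuc m t \<sigma>)) / real (card (Ac (C m)))"

lemma emis_le1: "m < M \<Longrightarrow> \<sigma> \<in> St (C m) \<Longrightarrow> \<omega> \<in> Ob (C m) \<Longrightarrow> emis (C m) \<sigma> \<omega> \<le> 1"
proof -
  assume h: "m < M" "\<sigma> \<in> St (C m)" "\<omega> \<in> Ob (C m)"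
  then have w: "wf_pomdp (C m)" using wfm by blast
  then have "emis (C m) \<sigma> \<omega> \<le> (\<Sum>ob\<in>Ob (C m). emis (C m) \<sigma> ob)"
    using h by (intro member_le_sum) (auto simp: wf_pomdp_def)
  then show ?thesis using w h by (auto simp: wf_pomdp_def)
qed

lemma emis_nn_m: "m < M \<Longrightarrow> \<sigma> \<in> St (C m) \<Longrightarrow> \<omega> \<in> Ob (C m) \<Longrightarrow> emis (C m) \<sigma> \<omega> \<ge> 0"
  using wfm by (auto simp: wf_pomdp_def)

lemma dl_props:
  assumes m: "m < M" and t: "t \<in> {1..T}" and \<omega>: "\<omega> \<in> Ob (C m)"
  shows "\<alpha> \<in> Ac (C m) \<Longrightarrow> 0 \<le> dlc m t \<omega> \<alpha>" "\<alpha> \<in> Ac (C m) \<Longrightarrow> dlc m t \<omega> \<alpha> \<le> 1"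
    "(\<Sum>\<alpha>\<in>Ac (C m). dlc m t \<omega> \<alpha>) = 1"
    "\<sigma> \<in> St (C m) \<Longrightarrow> \<alpha> \<in> Ac (C m) \<Longrightarrow> tauo m t \<sigma> \<omega> \<alpha> \<le> dlc m t \<omega> \<alpha>"
    "\<sigma> \<in> St (C m) \<Longrightarrow> \<alpha> \<in> Ac (C m) \<Longrightarrow> emis (C m) \<sigma> \<omega> * nuc m t \<sigma> + dlc m t \<omega> \<alpha> - 1 \<le> tauo m t \<sigma> \<omega> \<alpha>"
proof -
  have c1: "(\<Sum>\<sigma>\<in>St (C m). emis (C m) \<sigma> \<omega> * nuc m t \<sigma>) \<le> 1"
  proof -
    have "(\<Sum>\<sigma>\<in>St (C m). emis (C m) \<sigma> \<omega> * nuc m t \<sigma>) \<le> (\<Sum>\<sigma>\<in>St (C m). nuc m t \<sigma>)"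
      using m t \<omega> by (intro sum_mono mult_left_le_one_le nuc_nn emis_le1 emis_nn_m) auto
    then show ?thesis using nuc_mass[OF m t] by simp
  qed
  note L = dl_lemma[where S="St (C m)" and A="Ac (C m)" and \<tau>="\<lambda>\<sigma> \<alpha>. tauo m t \<sigma> \<omega> \<alpha>"
      and E="\<lambda>\<sigma>. emis (C m) \<sigma> \<omega> * nuc m t \<sigma>", OF fS[OF m] fA[OF m] Acm_ne[OF m] tauo_nn[OF t] tauo_emis[OF m t \<omega>] c1,
      folded dlc_def]
  show "\<alpha> \<in> Ac (C m) \<Longrightarrow> 0 \<le> dlc m t \<omega> \<alpha>" "\<alpha> \<in> Ac (C m) \<Longrightarrow> dlc m t \<omega> \<alpha> \<le> 1"
    "(\<Sum>\<alpha>\<in>Ac (C m). dlc m t \<omega> \<alpha>) = 1"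
    "\<sigma> \<in> St (C m) \<Longrightarrow> \<alpha> \<in> Ac (C m) \<Longrightarrow> tauo m t \<sigma> \<omega> \<alpha> \<le> dlc m t \<omega> \<alpha>"
    "\<sigma> \<in> St (C m) \<Longrightarrow> \<alpha> \<in> Ac (C m) \<Longrightarrow> emis (C m) \<sigma> \<omega> * nuc m t \<sigma> + dlc m t \<omega> \<alpha> - 1 \<le> tauo m t \<sigma> \<omega> \<alpha>"
    using L by auto
qed


lemma QR_comp:
  assumes m: "m < M"
  shows "QR T (C m) (init (C m)) (tauo m) (taut m) (dlc m)"
  unfolding QR_def
proof (intro conjI ballI)
  fix t ob a assume t: "t \<in> {1..T}" and ob: "ob \<in> Ob (C m)" and a: "a \<in> Ac (C m)"
  show "0 \<le> dlc m t ob a" using dl_props[OF m t ob] a by auto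
  show "dlc m t ob a \<le> 1" using dl_props[OF m t ob] a by auto
next
  fix t ob assume t: "t \<in> {1..T}" and ob: "ob \<in> Ob (C m)"
  show "(\<Sum>a\<in>Ac (C m). dlc m t ob a) = 1" using dl_props[OF m t ob] by auto
next
  fix s assume "s \<in> St (C m)"
  then show "0 \<le> init (C m) s" using wfm[OF m] by (auto simp: wf_pomdp_def)
  show "init (C m) s = init (C m) s" ..
next
  fix t s ob a assume t: "t \<in> {1..T}"
  show "0 \<le> tauo m t s ob a" using tauo_nn[OF t] .
next
  fix t s a s' assume t: "t \<in> {1..T}"
  show "0 \<le> taut m t s a s'" using taut_nn[OF t] .
next
  fix t s assume t: "t \<in> {1..T}" and s: "s \<in> St (C m)"
  show "(\<Sum>ob\<in>Ob (C m). \<Sum>a\<in>Ac (C m). tauo m t s ob a) = nuQ (C m) (init (C m)) (taut m) t s"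
    using tauo_sum_all[OF m t s] nuQ_eq[OF m t s] by simp
next
  fix t s a assume t: "t \<in> {1..T}" and s: "s \<in> St (C m)" and a: "a \<in> Ac (C m)"
  show "(\<Sum>sb\<in>St (C m). taut m t s a sb) = (\<Sum>ob\<in>Ob (C m). tauo m t s ob a)"
    unfolding taut_sum3[OF m] tauo_sum2[OF m]
    using t by (intro sum.cong refl) (simp add: J3 del: joint_sel)
next
  fix t s a s' assume t: "t \<in> {1..T}" and s': "s' \<in> St (C m)"
  show "taut m t s a s' = trans (C m) s a s' * (\<Sum>sb\<in>St (C m). taut m t s a sb)"
    using taut_trans[OF m t s'] .
next
  fix t s ob a assume t: "t \<in> {1..T}" and s: "s \<in> St (C m)" and ob: "ob \<in> Ob (C m)" and a: "a \<in> Ac (C m)"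
  have le: "tauo m t s ob a \<le> (\<Sum>a'\<in>Ac (C m). tauo m t s ob a')"
    using a fA[OF m] by (intro member_le_sum tauo_nn[OF t]) auto
  show "tauo m t s ob a \<le> emis (C m) s ob * nuQ (C m) (init (C m)) (taut m) t s"
    using le tauo_emis[OF m t ob] nuQ_eq[OF m t s] by auto
  show "tauo m t s ob a \<le> dlc m t ob a" using dl_props[OF m t ob] s a by auto
  show "emis (C m) s ob * nuQ (C m) (init (C m)) (taut m) t s + dlc m t ob a - 1 \<le> tauo m t s ob a"
    using dl_props[OF m t ob] s a nuQ_eq[OF m t s] by auto
qed


lemma tauo_sum_so:
  assumes m: "m < M"
  shows "(\<Sum>\<sigma>\<in>St (C m). \<Sum>\<omega>\<in>Ob (C m). tauo m t \<sigma> \<omega> \<alpha>) =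
    (\<Sum>s\<in>St J. \<Sum>o'\<in>Ob J. \<Sum>a\<in>Ac J. if a m = \<alpha> then X t s o' a else 0)"
proof -
  have "(\<Sum>\<sigma>\<in>St (C m). \<Sum>\<omega>\<in>Ob (C m). tauo m t \<sigma> \<omega> \<alpha>) = (\<Sum>\<sigma>\<in>St (C m). \<Sum>s\<in>St J. \<Sum>o'\<in>Ob J. \<Sum>a\<in>Ac J. \<Sum>\<omega>\<in>Ob (C m).
     if s m = \<sigma> then if o' m = \<omega> then if a m = \<alpha> then X t s o' a else 0 else 0 else 0)"
    unfolding tauo_def by (intro sum.cong refl sum3_in)
  also have "\<dots> = (\<Sum>s\<in>St J. \<Sum>o'\<in>Ob J. \<Sum>a\<in>Ac J. \<Sum>\<sigma>\<in>St (C m). \<Sum>\<omega>\<in>Ob (C m).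
     if s m = \<sigma> then if o' m = \<omega> then if a m = \<alpha> then X t s o' a else 0 else 0 else 0)"
    by (rule sum3_in)
  also have "\<dots> = (\<Sum>s\<in>St J. \<Sum>o'\<in>Ob J. \<Sum>a\<in>Ac J. if a m = \<alpha> then X t s o' a else 0)"
    using m fS fO by (simp add: sum_if_const SJm OJm del: joint_sel)
  finally show ?thesis .
qed

lemma budget:
  assumes t: "t \<in> {1..T}" and j: "j < q"
  shows "(\<Sum>m<M. \<Sum>a\<in>Ac (C m). D m a j * (\<Sum>s\<in>St (C m). \<Sum>ob\<in>Ob (C m). tauo m t s ob a)) \<le> b j"
proof -
  have step: "(\<Sum>\<alpha>\<in>Ac (C m). D m \<alpha> j * (\<Sum>s\<in>St (C m). \<Sum>ob\<in>Ob (C m). tauo m t s ob \<alpha>)) =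
     (\<Sum>s\<in>St J. \<Sum>o'\<in>Ob J. \<Sum>a\<in>Ac J. D m (a m) j * X t s o' a)" if m: "m < M" for m
  proof -
    have "(\<Sum>\<alpha>\<in>Ac (C m). D m \<alpha> j * (\<Sum>s\<in>St (C m). \<Sum>ob\<in>Ob (C m). tauo m t s ob \<alpha>)) =
      (\<Sum>\<alpha>\<in>Ac (C m). \<Sum>s\<in>St J. \<Sum>o'\<in>Ob J. \<Sum>a\<in>Ac J. if a m = \<alpha> then D m \<alpha> j * X t s o' a else 0)"
      unfolding tauo_sum_so[OF m] by (simp add: sum_distrib_left mult_if0 del: joint_sel)
    also have "\<dots> = (\<Sum>s\<in>St J. \<Sum>o'\<in>Ob J. \<Sum>a\<in>Ac J. \<Sum>\<alpha>\<in>Ac (C m). if a m = \<alpha> then D m \<alpha> j * X t s o' a else 0)"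
      by (rule sum3_in)
    also have "\<dots> = (\<Sum>s\<in>St J. \<Sum>o'\<in>Ob J. \<Sum>a\<in>Ac J. D m (a m) j * X t s o' a)"
      using m fA by (simp add: AJm del: joint_sel)
    finally show ?thesis .
  qed
  have "(\<Sum>m<M. \<Sum>a\<in>Ac (C m). D m a j * (\<Sum>s\<in>St (C m). \<Sum>ob\<in>Ob (C m). tauo m t s ob a)) =
     (\<Sum>m<M. \<Sum>s\<in>St J. \<Sum>o'\<in>Ob J. \<Sum>a\<in>Ac J. D m (a m) j * X t s o' a)"
    using step by simp
  also have "\<dots> = (\<Sum>s\<in>St J. \<Sum>o'\<in>Ob J. \<Sum>a\<in>Ac J. \<Sum>m<M. D m (a m) j * X t s o' a)"
    by (rule sum3_in)
  also have "\<dots> = (\<Sum>s\<in>St J. \<Sum>o'\<in>Ob J. \<Sum>a\<in>Ac J. (\<Sum>m<M. D m (a m) j) * X t s o' a)"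
    by (simp add: sum_distrib_right del: joint_sel)
  also have "\<dots> \<le> (\<Sum>s\<in>St J. \<Sum>o'\<in>Ob J. \<Sum>a\<in>Ac J. b j * X t s o' a)"
  proof (intro sum_mono mult_right_mono)
    fix s o' a assume "s \<in> St J" "o' \<in> Ob J" "a \<in> Ac J"
    then show "(\<Sum>m<M. D m (a m) j) \<le> b j" "0 \<le> X t s o' a" using j Xnn[OF t] by auto
  qed
  also have "\<dots> = b j * (\<Sum>s\<in>St J. NJ t s)"
    using t by (simp add: sum_distrib_left[symmetric] J2 NJ_def del: joint_sel)
  also have "\<dots> = b j" using mass[OF t] by simp
  finally show ?thesis .
qed

lemma obj_comp:
  assumes m: "m < M"
  shows "(\<Sum>\<sigma>\<in>St (C m). \<Sum>\<alpha>\<in>Ac (C m). \<Sum>\<sigma>'\<in>St (C m). rew (C m) \<sigma> \<alpha> \<sigma>' * taut m t \<sigma> \<alpha> \<sigma>') =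
    (\<Sum>s\<in>St J. \<Sum>a\<in>Ac J. \<Sum>s'\<in>St J. rew (C m) (s m) (a m) (s' m) * Y t s a s')"
proof -
  have "(\<Sum>\<sigma>\<in>St (C m). \<Sum>\<alpha>\<in>Ac (C m). \<Sum>\<sigma>'\<in>St (C m). rew (C m) \<sigma> \<alpha> \<sigma>' * taut m t \<sigma> \<alpha> \<sigma>') =
    (\<Sum>\<sigma>\<in>St (C m). \<Sum>\<alpha>\<in>Ac (C m). \<Sum>\<sigma>'\<in>St (C m). \<Sum>s\<in>St J. \<Sum>a\<in>Ac J. \<Sum>s'\<in>St J.
      if s m = \<sigma> then if a m = \<alpha> then if s' m = \<sigma>' then rew (C m) \<sigma> \<alpha> \<sigma>' * Y t s a s' else 0 else 0 else 0)"
    unfolding taut_def by (simp add: sum_distrib_left mult_if0 del: joint_sel)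
  also have "\<dots> = (\<Sum>\<sigma>\<in>St (C m). \<Sum>\<alpha>\<in>Ac (C m). \<Sum>s\<in>St J. \<Sum>a\<in>Ac J. \<Sum>s'\<in>St J. \<Sum>\<sigma>'\<in>St (C m).
      if s m = \<sigma> then if a m = \<alpha> then if s' m = \<sigma>' then rew (C m) \<sigma> \<alpha> \<sigma>' * Y t s a s' else 0 else 0 else 0)"
    by (intro sum.cong refl sum3_in)
  also have "\<dots> = (\<Sum>\<sigma>\<in>St (C m). \<Sum>s\<in>St J. \<Sum>a\<in>Ac J. \<Sum>s'\<in>St J. \<Sum>\<alpha>\<in>Ac (C m). \<Sum>\<sigma>'\<in>St (C m).
      if s m = \<sigma> then if a m = \<alpha> then if s' m = \<sigma>' then rew (C m) \<sigma> \<alpha> \<sigma>' * Y t s a s' else 0 else 0 else 0)"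
    by (intro sum.cong refl sum3_in)
  also have "\<dots> = (\<Sum>s\<in>St J. \<Sum>a\<in>Ac J. \<Sum>s'\<in>St J. \<Sum>\<sigma>\<in>St (C m). \<Sum>\<alpha>\<in>Ac (C m). \<Sum>\<sigma>'\<in>St (C m).
      if s m = \<sigma> then if a m = \<alpha> then if s' m = \<sigma>' then rew (C m) \<sigma> \<alpha> \<sigma>' * Y t s a s' else 0 else 0 else 0)"
    by (rule sum3_in)
  also have "\<dots> = (\<Sum>s\<in>St J. \<Sum>a\<in>Ac J. \<Sum>s'\<in>St J. rew (C m) (s m) (a m) (s' m) * Y t s a s')"
    using m fS fA by (simp add: sum_if_const SJm AJm del: joint_sel)
  finally show ?thesis .
qed

lemma relax_obj_eq:
  "relax_obj T C M taut = (\<Sum>t=1..T. \<Sum>s\<in>St J. \<Sum>a\<in>Ac J. \<Sum>s'\<in>St J. rew J s a s' * Y t s a s')"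
proof -
  have "relax_obj T C M taut = (\<Sum>t=1..T. \<Sum>m<M. \<Sum>s\<in>St J. \<Sum>a\<in>Ac J. \<Sum>s'\<in>St J. rew (C m) (s m) (a m) (s' m) * Y t s a s')"
    unfolding relax_obj_def by (intro sum.cong refl obj_comp) auto
  also have "\<dots> = (\<Sum>t=1..T. \<Sum>s\<in>St J. \<Sum>a\<in>Ac J. \<Sum>s'\<in>St J. \<Sum>m<M. rew (C m) (s m) (a m) (s' m) * Y t s a s')"
    by (intro sum.cong refl sum3_in)
  also have "\<dots> = (\<Sum>t=1..T. \<Sum>s\<in>St J. \<Sum>a\<in>Ac J. \<Sum>s'\<in>St J. rew J s a s' * Y t s a s')"
    by (simp add: sum_distrib_right)
  finally show ?thesis .
qed

lemma relax_ok:
  "relax_feasible T C M q D b (\<lambda>m. init (C m)) tauo taut dlc"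
  unfolding relax_feasible_def using QR_comp budget by auto

end

locale occZ = occ C M q D b T X Y for C :: "nat \<Rightarrow> ('s, 'o, 'a) pomdp" and M q D b T X Y +
  fixes K :: "nat \<Rightarrow> (nat \<Rightarrow> 's) \<Rightarrow> (nat \<Rightarrow> 'a) \<Rightarrow> (nat \<Rightarrow> 'o) \<Rightarrow> (nat \<Rightarrow> 'a) \<Rightarrow> real"
  assumes Knn: "t \<in> {2..T} \<Longrightarrow> s' \<in> St J \<Longrightarrow> a' \<in> Ac J \<Longrightarrow> o' \<in> Ob J \<Longrightarrow> a \<in> Ac J \<Longrightarrow> K t s' a' o' a \<ge> 0"
    and Z2: "t \<in> {2..T} \<Longrightarrow> s \<in> St J \<Longrightarrow> o' \<in> Ob J \<Longrightarrow> a \<in> Ac J \<Longrightarrow>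
      (\<Sum>s'\<in>St J. \<Sum>a'\<in>Ac J. emis J s o' * trans J s' a' s * K t s' a' o' a) = X t s o' a"
    and Z3: "t \<in> {2..T} \<Longrightarrow> s' \<in> St J \<Longrightarrow> a' \<in> Ac J \<Longrightarrow> o' \<in> Ob J \<Longrightarrow>
      (\<Sum>a\<in>Ac J. K t s' a' o' a) = (\<Sum>sb\<in>St J. Y (t - 1) s' a' sb)"
begin

definition tauc where
  "tauc m t \<sigma>' \<alpha>' \<sigma> \<omega> \<alpha> = (\<Sum>s'\<in>St J. \<Sum>a'\<in>Ac J. \<Sum>s\<in>St J. \<Sum>o'\<in>Ob J. \<Sum>a\<in>Ac J.
     if s' m = \<sigma>' then if a' m = \<alpha>' then if s m = \<sigma> then if o' m = \<omega> then if a m = \<alpha> then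
       emis J s o' * trans J s' a' s * K t s' a' o' a else 0 else 0 else 0 else 0 else 0)"

lemma eJ_nn: "s \<in> St J \<Longrightarrow> o' \<in> Ob J \<Longrightarrow> emis J s o' \<ge> 0"
  using wfJ unfolding wf_pomdp_def by (simp del: joint_sel)
lemma tJ_nn: "s \<in> St J \<Longrightarrow> a \<in> Ac J \<Longrightarrow> s' \<in> St J \<Longrightarrow> trans J s a s' \<ge> 0"
  using wfJ unfolding wf_pomdp_def by (simp del: joint_sel)

lemma tauc_nn: "t \<in> {2..T} \<Longrightarrow> tauc m t \<sigma>' \<alpha>' \<sigma> \<omega> \<alpha> \<ge> 0"
  unfolding tauc_def by (auto intro!: sum_nonneg mult_nonneg_nonneg Knn eJ_nn tJ_nn simp del: joint_sel)

lemma tauc_sum_sa: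
  assumes m: "m < M" and t: "t \<in> {2..T}"
  shows "(\<Sum>\<sigma>'\<in>St (C m). \<Sum>\<alpha>'\<in>Ac (C m). tauc m t \<sigma>' \<alpha>' \<sigma> \<omega> \<alpha>) = tauo m t \<sigma> \<omega> \<alpha>"
proof -
  have "(\<Sum>\<sigma>'\<in>St (C m). \<Sum>\<alpha>'\<in>Ac (C m). tauc m t \<sigma>' \<alpha>' \<sigma> \<omega> \<alpha>) =
    (\<Sum>\<sigma>'\<in>St (C m). \<Sum>\<alpha>'\<in>Ac (C m). \<Sum>s'\<in>St J. \<Sum>a'\<in>Ac J. if s' m = \<sigma>' then if a' m = \<alpha>' then
      (\<Sum>s\<in>St J. \<Sum>o'\<in>Ob J. \<Sum>a\<in>Ac J. if s m = \<sigma> then if o' m = \<omega> then if a m = \<alpha> then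
       emis J s o' * trans J s' a' s * K t s' a' o' a else 0 else 0 else 0) else 0 else 0)"
    unfolding tauc_def by (simp add: sum_if_const del: joint_sel)
  also have "\<dots> = (\<Sum>s'\<in>St J. \<Sum>a'\<in>Ac J. \<Sum>s\<in>St J. \<Sum>o'\<in>Ob J. \<Sum>a\<in>Ac J. if s m = \<sigma> then if o' m = \<omega> then if a m = \<alpha> then
       emis J s o' * trans J s' a' s * K t s' a' o' a else 0 else 0 else 0)"
    by (rule collapse2) (use m fS fA SJm AJm in auto)
  also have "\<dots> = (\<Sum>s'\<in>St J. \<Sum>s\<in>St J. \<Sum>o'\<in>Ob J. \<Sum>a\<in>Ac J. \<Sum>a'\<in>Ac J. if s m = \<sigma> then if o' m = \<omega> then if a m = \<alpha> then
       emis J s o' * trans J s' a' s * K t s' a' o' a else 0 else 0 else 0)"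
    by (intro sum.cong refl sum3_in)
  also have "\<dots> = (\<Sum>s\<in>St J. \<Sum>o'\<in>Ob J. \<Sum>a\<in>Ac J. \<Sum>s'\<in>St J. \<Sum>a'\<in>Ac J. if s m = \<sigma> then if o' m = \<omega> then if a m = \<alpha> then
       emis J s o' * trans J s' a' s * K t s' a' o' a else 0 else 0 else 0)"
    by (rule sum3_in)
  also have "\<dots> = tauo m t \<sigma> \<omega> \<alpha>"
    unfolding tauo_def using t by (intro sum.cong refl) (simp add: sum_if_const Z2 del: joint_sel)
  finally show ?thesis .
qed


definition Rm where
  "Rm m s' a' o' = (\<Prod>k\<in>{..<M}-{m}. \<Sum>x\<in>St (C k). emis (C k) x (o' k) * trans (C k) (s' k) (a' k) x)"

lemma margSO:
  assumes m: "m < M" and s': "s' \<in> St J" and a': "a' \<in> Ac J" and o': "o' \<in> Ob J" and \<sigma>: "\<sigma> \<in> St (C m)"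
  shows "(\<Sum>s\<in>St J. if s m = \<sigma> then emis J s o' * trans J s' a' s else 0) =
     emis (C m) \<sigma> (o' m) * trans (C m) (s' m) (a' m) \<sigma> * Rm m s' a' o'"
proof -
  have "(\<Sum>s\<in>St J. if s m = \<sigma> then emis J s o' * trans J s' a' s else 0) =
     (\<Sum>s\<in>PiE {..<M} (\<lambda>k. St (C k)). if s m = \<sigma> then
        (\<Prod>k\<in>{..<M}. emis (C k) (s k) (o' k) * trans (C k) (s' k) (a' k) (s k)) else 0)"
    by (simp add: prod.distrib)
  also have "\<dots> = emis (C m) \<sigma> (o' m) * trans (C m) (s' m) (a' m) \<sigma> * Rm m s' a' o'"
    unfolding Rm_def by (rule sum_PiE_marg) (use m \<sigma> fS in auto)
  finally show ?thesis .
qed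

lemma Rsum:
  assumes m: "m < M" and s': "s' \<in> St J" and a': "a' \<in> Ac J" and \<omega>: "\<omega> \<in> Ob (C m)"
  shows "(\<Sum>o'\<in>Ob J. if o' m = \<omega> then Rm m s' a' o' else 0) = 1"
proof -
  define h where "h k y = (if k = m then 1 else \<Sum>x\<in>St (C k). emis (C k) x y * trans (C k) (s' k) (a' k) x)" for k y
  have "Rm m s' a' o' = (\<Prod>k\<in>{..<M}. h k (o' k))" for o'
  proof -
    have "(\<Prod>k\<in>{..<M}. h k (o' k)) = h m (o' m) * (\<Prod>k\<in>{..<M}-{m}. h k (o' k))"
      using m by (simp add: prod.remove)
    also have "(\<Prod>k\<in>{..<M}-{m}. h k (o' k)) = Rm m s' a' o'"
      unfolding Rm_def h_def by (rule prod.cong) auto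
    finally show ?thesis by (simp add: h_def)
  qed
  then have "(\<Sum>o'\<in>Ob J. if o' m = \<omega> then Rm m s' a' o' else 0) =
      (\<Sum>o'\<in>PiE {..<M} (\<lambda>k. Ob (C k)). if o' m = \<omega> then (\<Prod>k\<in>{..<M}. h k (o' k)) else 0)" by simp
  also have "\<dots> = h m \<omega>"
  proof (rule sum_PiE_marg1)
    fix k assume k: "k \<in> {..<M}" "k \<noteq> m"
    have sk: "s' k \<in> St (C k)" and ak: "a' k \<in> Ac (C k)" using s' a' k SJm AJm by auto
    have w: "wf_pomdp (C k)" using k wfm by auto
    have "(\<Sum>y\<in>Ob (C k). h k y) = (\<Sum>y\<in>Ob (C k). \<Sum>x\<in>St (C k). emis (C k) x y * trans (C k) (s' k) (a' k) x)"
      using k by (simp add: h_def)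
    also have "\<dots> = (\<Sum>x\<in>St (C k). trans (C k) (s' k) (a' k) x * (\<Sum>y\<in>Ob (C k). emis (C k) x y))"
      by (subst sum.swap) (simp add: sum_distrib_left mult_ac)
    also have "\<dots> = (\<Sum>x\<in>St (C k). trans (C k) (s' k) (a' k) x)"
      using w by (intro sum.cong refl) (auto simp: wf_pomdp_def)
    also have "\<dots> = 1" using w sk ak by (auto simp: wf_pomdp_def)
    finally show "(\<Sum>y\<in>Ob (C k). h k y) = 1" .
  qed (use m \<omega> fO in auto)
  also have "\<dots> = 1" by (simp add: h_def)
  finally show ?thesis .
qed

definition Kt where
  "Kt m t \<sigma>' \<alpha>' \<omega> \<alpha> = (\<Sum>s'\<in>St J. \<Sum>a'\<in>Ac J. \<Sum>o'\<in>Ob J. \<Sum>a\<in>Ac J.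
     if s' m = \<sigma>' then if a' m = \<alpha>' then if o' m = \<omega> then if a m = \<alpha> then
       Rm m s' a' o' * K t s' a' o' a else 0 else 0 else 0 else 0)"

lemma tauc_factor:
  assumes m: "m < M" and \<sigma>: "\<sigma> \<in> St (C m)"
  shows "tauc m t \<sigma>' \<alpha>' \<sigma> \<omega> \<alpha> = emis (C m) \<sigma> \<omega> * trans (C m) \<sigma>' \<alpha>' \<sigma> * Kt m t \<sigma>' \<alpha>' \<omega> \<alpha>"
proof -
  have "tauc m t \<sigma>' \<alpha>' \<sigma> \<omega> \<alpha> = (\<Sum>s'\<in>St J. \<Sum>a'\<in>Ac J. \<Sum>o'\<in>Ob J. \<Sum>a\<in>Ac J. \<Sum>s\<in>St J.
     if s' m = \<sigma>' then if a' m = \<alpha>' then if s m = \<sigma> then if o' m = \<omega> then if a m = \<alpha> then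
       emis J s o' * trans J s' a' s * K t s' a' o' a else 0 else 0 else 0 else 0 else 0)"
    unfolding tauc_def by (intro sum.cong refl) (subst sum3_perm', subst sum3_perm', rule refl)
  also have "\<dots> = (\<Sum>s'\<in>St J. \<Sum>a'\<in>Ac J. \<Sum>o'\<in>Ob J. \<Sum>a\<in>Ac J.
     emis (C m) \<sigma> \<omega> * trans (C m) \<sigma>' \<alpha>' \<sigma> * (if s' m = \<sigma>' then if a' m = \<alpha>' then if o' m = \<omega> then if a m = \<alpha> then
       Rm m s' a' o' * K t s' a' o' a else 0 else 0 else 0 else 0))"
  proof (intro sum.cong refl)
    fix s' a' o' a assume h: "s' \<in> St J" "a' \<in> Ac J" "o' \<in> Ob J" "a \<in> Ac J"
    have "(\<Sum>s\<in>St J. if s m = \<sigma> then emis J s o' * trans J s' a' s * K t s' a' o' a else 0) =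
        K t s' a' o' a * (\<Sum>s\<in>St J. if s m = \<sigma> then emis J s o' * trans J s' a' s else 0)"
      by (simp add: sum_distrib_left mult_if0 mult_ac del: joint_sel)
    also have "\<dots> = K t s' a' o' a * (emis (C m) \<sigma> (o' m) * trans (C m) (s' m) (a' m) \<sigma> * Rm m s' a' o')"
      using margSO[OF m h(1,2,3) \<sigma>] by simp
    finally have E: "(\<Sum>s\<in>St J. if s m = \<sigma> then emis J s o' * trans J s' a' s * K t s' a' o' a else 0) =
        K t s' a' o' a * (emis (C m) \<sigma> (o' m) * trans (C m) (s' m) (a' m) \<sigma> * Rm m s' a' o')" .
    show "(\<Sum>s\<in>St J. if s' m = \<sigma>' then if a' m = \<alpha>' then if s m = \<sigma> then if o' m = \<omega> then if a m = \<alpha> then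
       emis J s o' * trans J s' a' s * K t s' a' o' a else 0 else 0 else 0 else 0 else 0) =
      emis (C m) \<sigma> \<omega> * trans (C m) \<sigma>' \<alpha>' \<sigma> * (if s' m = \<sigma>' then if a' m = \<alpha>' then if o' m = \<omega> then if a m = \<alpha> then
       Rm m s' a' o' * K t s' a' o' a else 0 else 0 else 0 else 0)"
      using E by (cases "o' m = \<omega>"; cases "a m = \<alpha>") (simp_all add: sum_if_const mult_ac del: joint_sel)
  qed
  also have "\<dots> = emis (C m) \<sigma> \<omega> * trans (C m) \<sigma>' \<alpha>' \<sigma> * Kt m t \<sigma>' \<alpha>' \<omega> \<alpha>"
    unfolding Kt_def by (simp add: sum_distrib_left del: joint_sel)
  finally show ?thesis .
qed


lemma Kt_sum:
  assumes m: "m < M" and t: "t \<in> {2..T}" and \<omega>: "\<omega> \<in> Ob (C m)"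
  shows "(\<Sum>\<alpha>\<in>Ac (C m). Kt m t \<sigma>' \<alpha>' \<omega> \<alpha>) = (\<Sum>sb\<in>St (C m). taut m (t - 1) \<sigma>' \<alpha>' sb)"
proof -
  have "(\<Sum>\<alpha>\<in>Ac (C m). Kt m t \<sigma>' \<alpha>' \<omega> \<alpha>) = (\<Sum>s'\<in>St J. \<Sum>\<alpha>\<in>Ac (C m). \<Sum>a'\<in>Ac J. \<Sum>o'\<in>Ob J. \<Sum>a\<in>Ac J.
     if s' m = \<sigma>' then if a' m = \<alpha>' then if o' m = \<omega> then if a m = \<alpha> then
       Rm m s' a' o' * K t s' a' o' a else 0 else 0 else 0 else 0)"
    unfolding Kt_def by (rule sum.swap)
  also have "\<dots> = (\<Sum>s'\<in>St J. \<Sum>a'\<in>Ac J. \<Sum>o'\<in>Ob J. \<Sum>a\<in>Ac J. \<Sum>\<alpha>\<in>Ac (C m).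
     if s' m = \<sigma>' then if a' m = \<alpha>' then if o' m = \<omega> then if a m = \<alpha> then
       Rm m s' a' o' * K t s' a' o' a else 0 else 0 else 0 else 0)"
    by (intro sum.cong refl sum3_in)
  also have "\<dots> = (\<Sum>s'\<in>St J. \<Sum>a'\<in>Ac J. if s' m = \<sigma>' then if a' m = \<alpha>' then
      (\<Sum>o'\<in>Ob J. if o' m = \<omega> then Rm m s' a' o' * (\<Sum>a\<in>Ac J. K t s' a' o' a) else 0) else 0 else 0)"
    using m fA by (simp add: sum_if_const AJm sum_distrib_left del: joint_sel)
  also have "\<dots> = (\<Sum>s'\<in>St J. \<Sum>a'\<in>Ac J. if s' m = \<sigma>' then if a' m = \<alpha>' then
      (\<Sum>sb\<in>St J. Y (t - 1) s' a' sb) else 0 else 0)"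
  proof (intro sum.cong refl)
    fix s' a' assume h: "s' \<in> St J" "a' \<in> Ac J"
    have "(\<Sum>o'\<in>Ob J. if o' m = \<omega> then Rm m s' a' o' * (\<Sum>a\<in>Ac J. K t s' a' o' a) else 0) =
       (\<Sum>o'\<in>Ob J. (\<Sum>sb\<in>St J. Y (t - 1) s' a' sb) * (if o' m = \<omega> then Rm m s' a' o' else 0))"
      using Z3[OF t h] by (intro sum.cong refl) (simp del: joint_sel)
    also have "\<dots> = (\<Sum>sb\<in>St J. Y (t - 1) s' a' sb)"
      by (simp only: sum_distrib_left[symmetric] Rsum[OF m h \<omega>] mult_1_right)
    finally show "(if s' m = \<sigma>' then if a' m = \<alpha>' then
      (\<Sum>o'\<in>Ob J. if o' m = \<omega> then Rm m s' a' o' * (\<Sum>a\<in>Ac J. K t s' a' o' a) else 0) else 0 else 0) =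
      (if s' m = \<sigma>' then if a' m = \<alpha>' then (\<Sum>sb\<in>St J. Y (t - 1) s' a' sb) else 0 else 0)" by simp
  qed
  also have "\<dots> = (\<Sum>sb\<in>St (C m). taut m (t - 1) \<sigma>' \<alpha>' sb)"
    by (rule taut_sum3[OF m, symmetric])
  finally show ?thesis .
qed

lemma emis_trans_nn_m: "m < M \<Longrightarrow> \<sigma> \<in> St (C m) \<Longrightarrow> \<omega> \<in> Ob (C m) \<Longrightarrow> \<sigma>' \<in> St (C m) \<Longrightarrow> \<alpha>' \<in> Ac (C m) \<Longrightarrow>
   emis (C m) \<sigma> \<omega> * trans (C m) \<sigma>' \<alpha>' \<sigma> \<ge> 0"
  using wfm by (auto simp: wf_pomdp_def intro!: mult_nonneg_nonneg)

lemma cuts_ok: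
  assumes m: "m < M"
  shows "valid_cuts T (C m) (tauo m) (taut m) (tauc m)"
  unfolding valid_cuts_def
proof (intro conjI ballI)
  fix t \<sigma>' \<alpha>' \<sigma> \<omega> \<alpha> assume t: "t \<in> {2..T}" and \<sigma>': "\<sigma>' \<in> St (C m)" and \<alpha>': "\<alpha>' \<in> Ac (C m)"
    and \<sigma>: "\<sigma> \<in> St (C m)" and \<omega>: "\<omega> \<in> Ob (C m)" and \<alpha>: "\<alpha> \<in> Ac (C m)"
  show "0 \<le> tauc m t \<sigma>' \<alpha>' \<sigma> \<omega> \<alpha>" using tauc_nn[OF t] .
  define Dn where "Dn = (\<Sum>sb\<in>St (C m). emis (C m) sb \<omega> * trans (C m) \<sigma>' \<alpha>' sb)"
  have sumc: "(\<Sum>sb\<in>St (C m). tauc m t \<sigma>' \<alpha>' sb \<omega> \<alpha>) = Dn * Kt m t \<sigma>' \<alpha>' \<omega> \<alpha>"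
    unfolding Dn_def using tauc_factor[OF m] by (simp add: sum_distrib_right)
  show "tauc m t \<sigma>' \<alpha>' \<sigma> \<omega> \<alpha> = pcond (C m) \<sigma>' \<alpha>' \<omega> \<sigma> * (\<Sum>sb\<in>St (C m). tauc m t \<sigma>' \<alpha>' sb \<omega> \<alpha>)"
  proof (cases "Dn = 0")
    case True
    have "emis (C m) \<sigma> \<omega> * trans (C m) \<sigma>' \<alpha>' \<sigma> = 0"
      using True \<sigma> fS[OF m] emis_trans_nn_m[OF m _ \<omega> \<sigma>' \<alpha>'] unfolding Dn_def
      by (subst (asm) sum_nonneg_eq_0_iff) auto
    then show ?thesis using tauc_factor[OF m \<sigma>] by (auto simp: pcond_def)
  next
    case False
    then show ?thesis using tauc_factor[OF m \<sigma>] sumc by (simp add: pcond_def Dn_def[symmetric])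
  qed
next
  fix t \<sigma> \<omega> \<alpha> assume t: "t \<in> {2..T}"
  show "(\<Sum>\<sigma>'\<in>St (C m). \<Sum>\<alpha>'\<in>Ac (C m). tauc m t \<sigma>' \<alpha>' \<sigma> \<omega> \<alpha>) = tauo m t \<sigma> \<omega> \<alpha>"
    using tauc_sum_sa[OF m t] .
next
  fix t \<sigma>' \<alpha>' \<sigma> \<omega> assume t: "t \<in> {2..T}" and \<sigma>: "\<sigma> \<in> St (C m)" and \<omega>: "\<omega> \<in> Ob (C m)"
  show "(\<Sum>\<alpha>\<in>Ac (C m). tauc m t \<sigma>' \<alpha>' \<sigma> \<omega> \<alpha>) =
       emis (C m) \<sigma> \<omega> * trans (C m) \<sigma>' \<alpha>' \<sigma> * (\<Sum>sb\<in>St (C m). taut m (t - 1) \<sigma>' \<alpha>' sb)"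
    using tauc_factor[OF m \<sigma>] Kt_sum[OF m t \<omega>] by (simp add: sum_distrib_left[symmetric])
qed

end

declare joint_sel[simp del]

context occ
begin

lemma occ_mdp: "mdp_feasible T J (init J) Y"
  unfolding mdp_feasible_def
proof (intro conjI ballI)
  fix s assume "s \<in> St J"
  then show "0 \<le> init J s" using wfJ unfolding wf_pomdp_def by (simp del: joint_sel)
  show "init J s = init J s" ..
next
  fix t s a s' assume "t \<in> {1..T}" "s \<in> St J" "a \<in> Ac J" "s' \<in> St J"
  then show "0 \<le> Y t s a s'" by (rule Ynn)
next
  fix t s assume t: "t \<in> {1..T}" and s: "s \<in> St J"
  have "(\<Sum>a\<in>Ac J. \<Sum>s'\<in>St J. Y t s a s') = (\<Sum>a\<in>Ac J. \<Sum>o'\<in>Ob J. X t s o' a)"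
    using t s by (intro sum.cong refl J3) auto
  also have "\<dots> = (\<Sum>o'\<in>Ob J. \<Sum>a\<in>Ac J. X t s o' a)" by (rule sum.swap)
  also have "\<dots> = (if t = 1 then init J s else \<Sum>s''\<in>St J. \<Sum>a''\<in>Ac J. Y (t - 1) s'' a'' s)"
    using J2[OF t s] .
  finally show "(\<Sum>a\<in>Ac J. \<Sum>s'\<in>St J. Y t s a s') =
     (if t = 1 then init J s else \<Sum>s''\<in>St J. \<Sum>a''\<in>Ac J. Y (t - 1) s'' a'' s)" .
next
  fix t s a s' assume "t \<in> {1..T}" "s \<in> St J" "a \<in> Ac J" "s' \<in> St J"
  then show "Y t s a s' = trans J s a s' * (\<Sum>sb\<in>St J. Y t s a sb)" by (rule J4)
qed

end


lemma mdp_occ: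
  assumes wfc: "\<forall>m<M. wf_pomdp (C m)" and bnn: "\<forall>j<q. b j \<ge> 0" and Acne: "Ac (joint C M q D b) \<noteq> {}"
    and feas: "mdp_feasible T (joint C M q D b) mu1 mu"
  shows "occ C M q D b T (\<lambda>t s o' a. emis (joint C M q D b) s o' * (\<Sum>s'\<in>St (joint C M q D b). mu t s a s')) mu"
proof -
  interpret wcp C M q D b using wfc bnn Acne by unfold_locales
  have F: "\<And>s. s \<in> St J \<Longrightarrow> mu1 s = init J s"
    "\<And>t s a s'. t \<in> {1..T} \<Longrightarrow> s \<in> St J \<Longrightarrow> a \<in> Ac J \<Longrightarrow> s' \<in> St J \<Longrightarrow> mu t s a s' \<ge> 0"
    "\<And>t s. t \<in> {1..T} \<Longrightarrow> s \<in> St J \<Longrightarrow> (\<Sum>a\<in>Ac J. \<Sum>s'\<in>St J. mu t s a s') =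
        (if t = 1 then mu1 s else (\<Sum>s''\<in>St J. \<Sum>a''\<in>Ac J. mu (t - 1) s'' a'' s))"
    "\<And>t s a s'. t \<in> {1..T} \<Longrightarrow> s \<in> St J \<Longrightarrow> a \<in> Ac J \<Longrightarrow> s' \<in> St J \<Longrightarrow>
        mu t s a s' = trans J s a s' * (\<Sum>sb\<in>St J. mu t s a sb)"
    using feas unfolding mdp_feasible_def by blast+
  have eJ: "\<And>s o'. s \<in> St J \<Longrightarrow> o' \<in> Ob J \<Longrightarrow> emis J s o' \<ge> 0"
    and eS: "\<And>s. s \<in> St J \<Longrightarrow> (\<Sum>o'\<in>Ob J. emis J s o') = 1"
    using wfJ unfolding wf_pomdp_def by (simp_all del: joint_sel)
  show ?thesis
  proof (unfold_locales)
    fix t s o' a assume "t \<in> {1..T}" "s \<in> St J" "o' \<in> Ob J" "a \<in> Ac J"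
    then show "0 \<le> emis J s o' * (\<Sum>s'\<in>St J. mu t s a s')"
      using eJ F(2) by (auto intro!: mult_nonneg_nonneg sum_nonneg simp del: joint_sel)
  next
    fix t s a s' assume "t \<in> {1..T}" "s \<in> St J" "a \<in> Ac J" "s' \<in> St J"
    then show "0 \<le> mu t s a s'" by (rule F(2))
  next
    fix t s assume t: "t \<in> {1..T}" and s: "s \<in> St J"
    have "(\<Sum>o'\<in>Ob J. \<Sum>a\<in>Ac J. emis J s o' * (\<Sum>s'\<in>St J. mu t s a s')) =
        (\<Sum>o'\<in>Ob J. emis J s o') * (\<Sum>a\<in>Ac J. \<Sum>s'\<in>St J. mu t s a s')"
      by (simp only: sum_distrib_left[symmetric] sum_distrib_right[symmetric])
    also have "\<dots> = (if t = 1 then init J s else (\<Sum>s''\<in>St J. \<Sum>a''\<in>Ac J. mu (t - 1) s'' a'' s))"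
      using eS[OF s] F(3)[OF t s] F(1)[OF s] by (simp del: joint_sel)
    finally show "(\<Sum>o'\<in>Ob J. \<Sum>a\<in>Ac J. emis J s o' * (\<Sum>s'\<in>St J. mu t s a s')) =
        (if t = 1 then init J s else (\<Sum>s''\<in>St J. \<Sum>a''\<in>Ac J. mu (t - 1) s'' a'' s))" .
  next
    fix t s a assume t: "t \<in> {1..T}" and s: "s \<in> St J" and a: "a \<in> Ac J"
    show "(\<Sum>s'\<in>St J. mu t s a s') = (\<Sum>o'\<in>Ob J. emis J s o' * (\<Sum>s'\<in>St J. mu t s a s'))"
      using eS[OF s] by (simp add: sum_distrib_right[symmetric] del: joint_sel)
  next
    fix t s a s' assume "t \<in> {1..T}" "s \<in> St J" "a \<in> Ac J" "s' \<in> St J"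
    then show "mu t s a s' = trans J s a s' * (\<Sum>sb\<in>St J. mu t s a sb)" by (rule F(4))
  next
    fix t s o' assume t: "t \<in> {1..T}" and s: "s \<in> St J" and o': "o' \<in> Ob J"
    show "(\<Sum>a\<in>Ac J. emis J s o' * (\<Sum>s'\<in>St J. mu t s a s')) =
       emis J s o' * (\<Sum>o''\<in>Ob J. \<Sum>a\<in>Ac J. emis J s o'' * (\<Sum>s'\<in>St J. mu t s a s'))"
      using eS[OF s] by (simp add: sum_distrib_left[symmetric] sum_distrib_right[symmetric] del: joint_sel)
  qed
qed


lemma hist_main:
  assumes wfc: "\<forall>m<M. wf_pomdp (C m)" and bnn: "\<forall>j<q. b j \<ge> 0" and Acne: "Ac (joint C M q D b) \<noteq> {}"
    and pv: "policy_valid T (joint C M q D b) pol"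
  shows "(\<exists>tau1 tauo taut dl tauc. relax_feasible T C M q D b tau1 tauo taut dl \<and>
            (\<forall>m<M. valid_cuts T (C m) (tauo m) (taut m) (tauc m)) \<and>
            relax_obj T C M taut = his_value T (joint C M q D b) pol) \<and>
         (\<exists>mu1 mu. mdp_feasible T (joint C M q D b) mu1 mu)"
proof -
  interpret W: wcp C M q D b using wfc bnn Acne by unfold_locales
  interpret Tr: trajs "joint C M q D b" pol T using W.wfJ pv by unfold_locales
  define X where "X t s o' a = emis W.J s o' * Tr.Rq (t - 1) s o' a" for t s o' a
  define Y where "Y t s a s' = trans W.J s a s' * (\<Sum>\<omega>\<in>Ob W.J. emis W.J s \<omega> * Tr.Rq (t - 1) s \<omega> a)" for t s a s'
  define K where "K t s' a' o' a = Tr.Kq (t - 2) s' a' o' a" for t s' a' o' a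
  have Z: "occZ C M q D b T X Y K"
  proof (unfold_locales)
    fix t s o' a assume t: "t \<in> {1..T}" and h: "s \<in> St W.J" "o' \<in> Ob W.J" "a \<in> Ac W.J"
    show "0 \<le> X t s o' a" unfolding X_def using t h
      by (intro mult_nonneg_nonneg Tr.emis_nn Tr.Rq_nn) auto
  next
    fix t s a s' assume t: "t \<in> {1..T}" and h: "s \<in> St W.J" "a \<in> Ac W.J" "s' \<in> St W.J"
    show "0 \<le> Y t s a s'" unfolding Y_def using t h
      by (intro mult_nonneg_nonneg Tr.trans_nn sum_nonneg Tr.emis_nn Tr.Rq_nn) auto
  next
    fix t s assume t: "t \<in> {1..T}" and s: "s \<in> St W.J"
    have tl: "t - 1 < T" using t by auto
    have "(\<Sum>o'\<in>Ob W.J. \<Sum>a\<in>Ac W.J. X t s o' a) = (\<Sum>o'\<in>Ob W.J. emis W.J s o' * Tr.Bq (t - 1) s)"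
      unfolding X_def using t by (simp only: sum_distrib_left[symmetric] Tr.Rq_sum[OF tl])
    also have "\<dots> = Tr.Bq (t - 1) s" using Tr.emis_sum[OF s] by (simp only: sum_distrib_right[symmetric]; simp)
    also have "\<dots> = (if t = 1 then init W.J s else (\<Sum>s''\<in>St W.J. \<Sum>a''\<in>Ac W.J. Y (t - 1) s'' a'' s))"
    proof (cases "t = 1")
      case True then show ?thesis using Tr.Bq0[OF s] by simp
    next
      case False
      then have e: "t - 1 = Suc (t - 2)" using t by auto
      have "Tr.Bq (t - 1) s = (\<Sum>\<sigma>\<in>St W.J. \<Sum>\<alpha>\<in>Ac W.J. \<Sum>\<omega>\<in>Ob W.J. trans W.J \<sigma> \<alpha> s * emis W.J \<sigma> \<omega> * Tr.Rq (t - 2) \<sigma> \<omega> \<alpha>)"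
        unfolding e using t by (intro Tr.Bq_Suc s) auto
      also have "\<dots> = (\<Sum>s''\<in>St W.J. \<Sum>a''\<in>Ac W.J. Y (t - 1) s'' a'' s)"
        unfolding Y_def by (simp add: sum_distrib_left mult.assoc diff_diff_left numeral_2_eq_2)
      finally show ?thesis using False by simp
    qed
    finally show "(\<Sum>o'\<in>Ob W.J. \<Sum>a\<in>Ac W.J. X t s o' a) =
      (if t = 1 then init W.J s else (\<Sum>s''\<in>St W.J. \<Sum>a''\<in>Ac W.J. Y (t - 1) s'' a'' s))" .
  next
    fix t s a assume t: "t \<in> {1..T}" and s: "s \<in> St W.J" and a: "a \<in> Ac W.J"
    show "(\<Sum>s'\<in>St W.J. Y t s a s') = (\<Sum>o'\<in>Ob W.J. X t s o' a)"
      unfolding Y_def X_def using Tr.trans_sum[OF s a] by (simp only: sum_distrib_right[symmetric]; simp)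
  next
    fix t s a s' assume t: "t \<in> {1..T}" and s: "s \<in> St W.J" and a: "a \<in> Ac W.J" and s': "s' \<in> St W.J"
    show "Y t s a s' = trans W.J s a s' * (\<Sum>sb\<in>St W.J. Y t s a sb)"
      unfolding Y_def using Tr.trans_sum[OF s a] by (simp only: sum_distrib_right[symmetric]; simp)
  next
    fix t s o' assume t: "t \<in> {1..T}" and s: "s \<in> St W.J" and o': "o' \<in> Ob W.J"
    have "t - 1 < T" using t by auto
    then show "(\<Sum>a\<in>Ac W.J. X t s o' a) = emis W.J s o' * (\<Sum>o''\<in>Ob W.J. \<Sum>a\<in>Ac W.J. X t s o'' a)"
      unfolding X_def using Tr.emis_sum[OF s]
      by (simp only: sum_distrib_left[symmetric] sum_distrib_right[symmetric] Tr.Rq_sum; simp)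
  next
    fix t s' a' o' a assume t: "t \<in> {2..T}" and h: "s' \<in> St W.J" "a' \<in> Ac W.J" "o' \<in> Ob W.J" "a \<in> Ac W.J"
    show "0 \<le> K t s' a' o' a" unfolding K_def using t h by (intro Tr.Kq_nn) auto
  next
    fix t s o' a assume t: "t \<in> {2..T}" and s: "s \<in> St W.J" and h: "o' \<in> Ob W.J" "a \<in> Ac W.J"
    have e: "t - 1 = Suc (t - 2)" using t by auto
    have "(\<Sum>s'\<in>St W.J. \<Sum>a'\<in>Ac W.J. emis W.J s o' * trans W.J s' a' s * K t s' a' o' a) =
       emis W.J s o' * (\<Sum>s'\<in>St W.J. \<Sum>a'\<in>Ac W.J. trans W.J s' a' s * Tr.Kq (t - 2) s' a' o' a)"
      unfolding K_def by (simp add: sum_distrib_left mult.assoc del: joint_sel)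
    also have "\<dots> = emis W.J s o' * Tr.Rq (t - 1) s o' a"
      unfolding e using t by (subst Tr.Rq_Suc[OF _ s]) auto
    finally show "(\<Sum>s'\<in>St W.J. \<Sum>a'\<in>Ac W.J. emis W.J s o' * trans W.J s' a' s * K t s' a' o' a) = X t s o' a"
      unfolding X_def .
  next
    fix t s' a' o' assume t: "t \<in> {2..T}" and h: "s' \<in> St W.J" "a' \<in> Ac W.J" "o' \<in> Ob W.J"
    have e: "t - 1 - 1 = t - 2" by simp
    have "(\<Sum>a\<in>Ac W.J. K t s' a' o' a) = (\<Sum>\<omega>'\<in>Ob W.J. emis W.J s' \<omega>' * Tr.Rq (t - 2) s' \<omega>' a')"
      unfolding K_def using t by (intro Tr.Kq_sum) auto
    also have "\<dots> = (\<Sum>sb\<in>St W.J. Y (t - 1) s' a' sb)"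
      unfolding Y_def e using Tr.trans_sum[OF h(1,2)] by (simp only: sum_distrib_right[symmetric]; simp)
    finally show "(\<Sum>a\<in>Ac W.J. K t s' a' o' a) = (\<Sum>sb\<in>St W.J. Y (t - 1) s' a' sb)" .
  qed
  interpret Z: occZ C M q D b T X Y K by (rule Z)
  have obj: "relax_obj T C M Z.taut = his_value T W.J pol"
    unfolding Z.relax_obj_eq Tr.his_value_eq Y_def
    by (simp add: sum.atLeast1_atMost_eq mult.assoc del: joint_sel)
  show ?thesis
    using Z.relax_ok Z.cuts_ok obj Z.occ_mdp by blast
qed

lemma QR_E1: "QR T P tau1 tauo taut dl \<Longrightarrow> \<forall>s\<in>St P. tau1 s \<ge> 0 \<and> tau1 s = init P s"
  unfolding QR_def by (elim conjE) assumption
lemma QR_E2: "QR T P tau1 tauo taut dl \<Longrightarrow> \<forall>t\<in>{1..T}. \<forall>s\<in>St P. \<forall>a\<in>Ac P. \<forall>s'\<in>St P. taut t s a s' \<ge> 0"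
  unfolding QR_def by (elim conjE) assumption
lemma QR_E3: "QR T P tau1 tauo taut dl \<Longrightarrow> \<forall>t\<in>{1..T}. \<forall>s\<in>St P. (\<Sum>ob\<in>Ob P. \<Sum>a\<in>Ac P. tauo t s ob a) = nuQ P tau1 taut t s"
  unfolding QR_def by (elim conjE) assumption
lemma QR_E4: "QR T P tau1 tauo taut dl \<Longrightarrow> \<forall>t\<in>{1..T}. \<forall>s\<in>St P. \<forall>a\<in>Ac P. (\<Sum>sb\<in>St P. taut t s a sb) = (\<Sum>ob\<in>Ob P. tauo t s ob a)"
  unfolding QR_def by (elim conjE) assumption

lemma QR_mass:
  assumes wf: "wf_pomdp P" and Q: "QR T P tau1 tauo taut dl"
  shows "t \<in> {1..T} \<Longrightarrow> (\<Sum>s\<in>St P. \<Sum>a\<in>Ac P. \<Sum>s'\<in>St P. taut t s a s') = 1"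
proof (induction t)
  case 0 then show ?case by simp
next
  case (Suc t)
  have "(\<Sum>s\<in>St P. \<Sum>a\<in>Ac P. \<Sum>s'\<in>St P. taut (Suc t) s a s') = (\<Sum>s\<in>St P. \<Sum>a\<in>Ac P. \<Sum>ob\<in>Ob P. tauo (Suc t) s ob a)"
    using QR_E4[OF Q] Suc.prems by (intro sum.cong refl) auto
  also have "\<dots> = (\<Sum>s\<in>St P. \<Sum>ob\<in>Ob P. \<Sum>a\<in>Ac P. tauo (Suc t) s ob a)"
    by (intro sum.cong refl sum.swap)
  also have "\<dots> = (\<Sum>s\<in>St P. nuQ P tau1 taut (Suc t) s)"
    using QR_E3[OF Q] Suc.prems by (intro sum.cong refl) auto
  also have "\<dots> = 1"
  proof (cases "t = 0")
    case True
    then have "(\<Sum>s\<in>St P. nuQ P tau1 taut (Suc t) s) = (\<Sum>s\<in>St P. init P s)"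
      using QR_E1[OF Q] by (intro sum.cong refl) (auto simp: nuQ_def)
    then show ?thesis using wf unfolding wf_pomdp_def by simp
  next
    case False
    have "(\<Sum>s\<in>St P. nuQ P tau1 taut (Suc t) s) = (\<Sum>s\<in>St P. \<Sum>s''\<in>St P. \<Sum>a''\<in>Ac P. taut t s'' a'' s)"
      using False by (simp add: nuQ_def)
    also have "\<dots> = (\<Sum>s''\<in>St P. \<Sum>a''\<in>Ac P. \<Sum>s\<in>St P. taut t s'' a'' s)"
      by (subst sum.swap, intro sum.cong refl sum.swap)
    also have "\<dots> = 1" using Suc.IH Suc.prems False by auto
    finally show ?thesis .
  qed
  finally show ?case .
qed

lemma QR_taut_le1:
  assumes wf: "wf_pomdp P" and Q: "QR T P tau1 tauo taut dl" and t: "t \<in> {1..T}"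
    and h: "s \<in> St P" "a \<in> Ac P" "s' \<in> St P"
  shows "taut t s a s' \<le> 1"
proof -
  have fin: "finite (St P)" "finite (Ac P)" using wf by (auto simp: wf_pomdp_def)
  have nn: "\<And>s a s'. s \<in> St P \<Longrightarrow> a \<in> Ac P \<Longrightarrow> s' \<in> St P \<Longrightarrow> taut t s a s' \<ge> 0"
    using QR_E2[OF Q] t by auto
  have "taut t s a s' \<le> (\<Sum>s'\<in>St P. taut t s a s')"
    using h fin nn by (intro member_le_sum) auto
  also have "\<dots> \<le> (\<Sum>a\<in>Ac P. \<Sum>s'\<in>St P. taut t s a s')"
    using h fin nn by (intro member_le_sum[of a "Ac P" "\<lambda>a. \<Sum>s'\<in>St P. taut t s a s'"] sum_nonneg) auto
  also have "\<dots> \<le> (\<Sum>s\<in>St P. \<Sum>a\<in>Ac P. \<Sum>s'\<in>St P. taut t s a s')"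
    using h fin nn by (intro member_le_sum[of s "St P" "\<lambda>s. \<Sum>a\<in>Ac P. \<Sum>s'\<in>St P. taut t s a s'"] sum_nonneg) auto
  also have "\<dots> = 1" using QR_mass[OF wf Q t] .
  finally show ?thesis .
qed

lemma relax_bound:
  assumes wfc: "\<forall>m<M. wf_pomdp (C m)" and F: "relax_feasible T C M q D b tau1 tauo taut dl"
  shows "relax_obj T C M taut \<le> (\<Sum>t=1..T. \<Sum>m<M. \<Sum>s\<in>St (C m). \<Sum>a\<in>Ac (C m). \<Sum>s'\<in>St (C m). \<bar>rew (C m) s a s'\<bar>)"
  unfolding relax_obj_def
proof (intro sum_mono)
  fix t m s a s' assume t: "t \<in> {1..T}" and m: "m \<in> {..<M}" and h: "s \<in> St (C m)" "a \<in> Ac (C m)" "s' \<in> St (C m)"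
  have w: "wf_pomdp (C m)" and Q: "QR T (C m) (tau1 m) (tauo m) (taut m) (dl m)"
    using wfc F m unfolding relax_feasible_def by auto
  have le1: "taut m t s a s' \<le> 1" by (rule QR_taut_le1[OF w Q t h])
  have nn: "taut m t s a s' \<ge> 0" using QR_E2[OF Q] t h by auto
  have "rew (C m) s a s' * taut m t s a s' \<le> \<bar>rew (C m) s a s'\<bar> * taut m t s a s'"
    using nn by (intro mult_right_mono) auto
  also have "\<dots> \<le> \<bar>rew (C m) s a s'\<bar> * 1" using le1 by (intro mult_left_mono) auto
  finally show "rew (C m) s a s' * taut m t s a s' \<le> \<bar>rew (C m) s a s'\<bar>" by simp
qed

lemma unif_policy:
  assumes "finite (Ac P)" "Ac P \<noteq> {}"
  shows "policy_valid T P (\<lambda>t h a. 1 / real (card (Ac P)))"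
  using assms unfolding policy_valid_def by (auto simp: card_gt_0_iff)

theorem mainTheorem4:
  fixes T M q :: nat
    and C :: "nat \<Rightarrow> ('s, 'o, 'a) pomdp"
    and D :: "nat \<Rightarrow> 'a \<Rightarrow> nat \<Rightarrow> real"
    and b :: "nat \<Rightarrow> real"
  assumes "\<forall>m<M. wf_pomdp (C m)"
    and "\<forall>j<q. b j \<ge> 0"
    and "Ac (joint C M q D b) \<noteq> {}"
  shows "(\<forall>mu1 mu. mdp_feasible T (joint C M q D b) mu1 mu \<longrightarrow>
            (\<exists>tau1 tauo taut dl. relax_feasible T C M q D b tau1 tauo taut dl \<and>
               relax_obj T C M taut = mdp_obj T (joint C M q D b) mu)) \<and>
         v_MDP T (joint C M q D b) \<le> z_R T C M q D b \<and>
         v_his T (joint C M q D b) \<le> z_Rc T C M q D b \<and>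
         z_Rc T C M q D b \<le> z_R T C M q D b"
proof -
  note wfc = assms(1) and bnn = assms(2) and Acne = assms(3)
  interpret W: wcp C M q D b using assms by unfold_locales
  define S2 where "S2 = {relax_obj T C M taut | tau1 tauo taut dl. relax_feasible T C M q D b tau1 tauo taut dl}"
  define Sc where "Sc = {relax_obj T C M taut | tau1 tauo taut dl tauc.
            relax_feasible T C M q D b tau1 tauo taut dl \<and>
            (\<forall>m<M. valid_cuts T (C m) (tauo m) (taut m) (tauc m))}"
  define S1 where "S1 = {mdp_obj T W.J mu | mu1 mu. mdp_feasible T W.J mu1 mu}"
  define Sh where "Sh = {his_value T W.J pol | pol. policy_valid T W.J pol}"
  have P1: "\<forall>mu1 mu. mdp_feasible T W.J mu1 mu \<longrightarrow>
            (\<exists>tau1 tauo taut dl. relax_feasible T C M q D b tau1 tauo taut dl \<and>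
               relax_obj T C M taut = mdp_obj T W.J mu)"
  proof (intro allI impI)
    fix mu1 mu assume f: "mdp_feasible T W.J mu1 mu"
    interpret O: occ C M q D b T "\<lambda>t s o' a. emis W.J s o' * (\<Sum>s'\<in>St W.J. mu t s a s')" mu
      by (rule mdp_occ[OF wfc bnn Acne f])
    show "\<exists>tau1 tauo taut dl. relax_feasible T C M q D b tau1 tauo taut dl \<and> relax_obj T C M taut = mdp_obj T W.J mu"
      using O.relax_ok O.relax_obj_eq unfolding mdp_obj_def by blast
  qed
  have bdd: "bdd_above S2"
    unfolding S2_def bdd_above_def using relax_bound[OF wfc] by blast
  have pu: "policy_valid T W.J (\<lambda>t h a. 1 / real (card (Ac W.J)))"
    by (rule unif_policy[OF W.fAJ Acne])
  have H: "\<And>pol. policy_valid T W.J pol \<Longrightarrow> (\<exists>tau1 tauo taut dl tauc. relax_feasible T C M q D b tau1 tauo taut dl \<and>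
            (\<forall>m<M. valid_cuts T (C m) (tauo m) (taut m) (tauc m)) \<and>
            relax_obj T C M taut = his_value T W.J pol) \<and>
         (\<exists>mu1 mu. mdp_feasible T W.J mu1 mu)"
    by (rule hist_main[OF wfc bnn Acne])
  have S1S2: "S1 \<subseteq> S2"
  proof
    fix x assume "x \<in> S1"
    then obtain mu1 mu where x: "x = mdp_obj T W.J mu" and f: "mdp_feasible T W.J mu1 mu" unfolding S1_def by blast
    obtain tau1 tauo taut dl where "relax_feasible T C M q D b tau1 tauo taut dl" "relax_obj T C M taut = mdp_obj T W.J mu"
      using P1 f by blast
    then show "x \<in> S2" unfolding S2_def x mem_Collect_eq by (intro exI conjI) (rule sym)
  qed
  have S1ne: "S1 \<noteq> {}" unfolding S1_def using H[OF pu] by blast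
  have ScS2: "Sc \<subseteq> S2" unfolding Sc_def S2_def by blast
  have Scne: "Sc \<noteq> {}" unfolding Sc_def using H[OF pu] by blast
  have ShSc: "Sh \<subseteq> Sc"
  proof
    fix x assume "x \<in> Sh"
    then obtain pol where x: "x = his_value T W.J pol" and p: "policy_valid T W.J pol" unfolding Sh_def by blast
    obtain tau1 tauo taut dl tauc where "relax_feasible T C M q D b tau1 tauo taut dl"
      "\<forall>m<M. valid_cuts T (C m) (tauo m) (taut m) (tauc m)" "relax_obj T C M taut = his_value T W.J pol"
      using H[OF p] by blast
    then show "x \<in> Sc" unfolding Sc_def x mem_Collect_eq by (intro exI conjI) (rule sym)
  qed
  have Shne: "Sh \<noteq> {}" unfolding Sh_def using pu by blast
  have bddc: "bdd_above Sc" by (rule bdd_above_mono[OF bdd ScS2])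
  have "Sup S1 \<le> Sup S2" by (rule cSup_subset_mono[OF S1ne bdd S1S2])
  moreover have "Sup Sc \<le> Sup S2" by (rule cSup_subset_mono[OF Scne bdd ScS2])
  moreover have "Sup Sh \<le> Sup Sc" by (rule cSup_subset_mono[OF Shne bddc ShSc])
  ultimately show ?thesis using P1
    unfolding v_MDP_def z_R_def z_Rc_def v_his_def S1_def S2_def Sc_def Sh_def by blast
qed

end
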